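(* Let $\sigma:[0,\infty)\to[0,\infty)$ be nondecreasing with $\lim_{t\to\infty}\sigma(t)=\infty$, let $\alpha>0$, and take $a\ge 0$ such that $\sigma(x)>0$ for $x\ge a$. Then the following are equivalent: (i) there exists $C>0$ such that $\int_1^{\infty}\frac{\sigma(yt)}{t^{1+\alpha}}\,dt\le C\sigma(y)+C$ for all $y>0$; (ii) there exists a nondecreasing function $\kappa:[0,\infty)\to[0,\infty)$ such that $\sigma\sim\kappa$, $\kappa(0)=\sigma(0)/\alpha^2$, $\kappa$ satisfies (i) (i.e. there is $C'>0$ with $\int_1^{\infty}\frac{\kappa(yt)}{t^{1+\alpha}}\,dt\le C'\kappa(y)+C'$ for all $y>0$), and $t\mapsto\kappa(t^{1/\alpha})$ is concave; (iii) $\lim_{\varepsilon\to 0}\limsup_{t\to+\infty}\frac{\varepsilon^{\alpha}\sigma(t)}{\sigma(\varepsilon t)}=0$; (iv) there exists $K>1$ such that $\limsup_{t\to+\infty}\frac{\sigma(Kt)}{\sigma(t)}<K^{\alpha}$; (v) $\gamma(\sigma)>1/\alpha$; (vi) $\alpha(\sigma)<\alpha$; (vii) there exists $\gamma\in(0,\alpha)$ such that $t\mapsto\sigma(t)/t^{\gamma}$ is almost decreasing in $[a,\infty)$ if $a>0$, and in $[\varepsilon,\infty)$ for every $\varepsilon>0$ if $a=0$; (viii) there exists $C>0$ such that $\int_a^{y}\frac{t^{\alpha}}{\sigma(t)}\frac{dt}{t}\le \frac{Cy^{\alpha}}{\sigma(y)}$ for all $y\ge a$; (ix) there exists $C>0$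 such that $\sum_{k=\lceil a\rceil+1}^{p}\frac{k^{\alpha-1}}{\sigma(k)}\le C\frac{p^{\alpha}}{\sigma(p)}$ for all $p\in\mathbb{N}$ with $p\ge\lceil a\rceil+1$; (x) for every $\theta\in(0,1)$ there exists $k\in\mathbb{N}$, $k\ge 2$, such that $\sigma(kp)\le\theta k^{\alpha}\sigma(p)$ for every $p\in\mathbb{N}$ with $p\ge\lceil a\rceil+1$; (xi) there exists $k\in\mathbb{N}$, $k\ge 2$, such that $\limsup_{p\in\mathbb{N},\,p\to\infty}\frac{\sigma(kp)}{\sigma(p)}<k^{\alpha}$; (xii) there exists $C>0$ such that $\sum_{k=p}^{\infty}\frac{\sigma(k)}{k^{1+\alpha}}\le C\frac{\sigma(p)}{p^{\alpha}}$ for every $p\in\mathbb{N}$ with $p\ge\lceil a\rceil$.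
   Context: $\mathbb{N}=\{1,2,\dots\}$, $\lceil x\rceil=\min\{k\in\mathbb{Z}:x\le k\}$. For functions $\sigma,\tau:I\to[0,\infty)$ on an unbounded interval $I\subseteq[0,\infty)$, $\sigma\sim\tau$ means there is $C\ge1$ with $C^{-1}\tau(t)-C\le\sigma(t)\le C\tau(t)+C$ for all $t\in I$. A function $h$ on $[a,\infty)$ is almost decreasing if there is $m>0$ with $m\,h(y)\le h(x)$ for all $a\le x\le y$. For a measurable positive function $f$ on some $[A,\infty)$, its upper Matuszewska index is $\alpha(f):=\inf\{\alpha\in\mathbb{R}:\exists C_\alpha>0\ \forall\Lambda>1,\ \limsup_{x\to\infty}\sup_{\lambda\in[1,\Lambda]}\frac{f(\lambda x)}{\lambda^{\alpha}f(x)}\le C_\alpha\}$ (with $\inf\emptyset=\infty$); for $\sigma$ as in the claim, $\alpha(\sigma)$ means the index of the restriction of $\sigma$ to any $[A,\infty)$ with $A>0$ on which $\sigma>0$ (this does not depend on $A$). For $\gamma>0$, say $(P_{\sigma,\gamma})$ holds if there is $K>1$ with $\limsup_{t\to\infty}\sigma(K^{\gamma}t)/\sigma(t)<K$; $\gamma(\sigma):=\sup\{\gamma>0:(P_{\sigma,\gamma})\text{ holds}\}$, and $\gamma(\sigma):=0$ if no $(P_{\sigma,\gamma})$ holds. *)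

theory Defs
  imports "HOL-Analysis.Analysis"
begin

definition sim_on :: "real set \<Rightarrow> (real \<Rightarrow> real) \<Rightarrow> (real \<Rightarrow> real) \<Rightarrow> bool" where
  "sim_on I \<sigma> \<tau> \<longleftrightarrow>
     (\<exists>C\<ge>1. \<forall>t\<in>I. \<tau> t / C - C \<le> \<sigma> t \<and> \<sigma> t \<le> C * \<tau> t + C)"

definition almost_decreasing_from :: "real \<Rightarrow> (real \<Rightarrow> real) \<Rightarrow> bool" where
  "almost_decreasing_from a h \<longleftrightarrow>
     (\<exists>m>0. \<forall>x y. a \<le> x \<longrightarrow> x \<le> y \<longrightarrow> m * h y \<le> h x)"

text \<open>Upper Matuszewska index (only the behaviour as x tends to infinity matters,
  so the restriction to some [A, infinity) is implicit).\<close>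
definition upper_matuszewska :: "(real \<Rightarrow> real) \<Rightarrow> ereal" where
  "upper_matuszewska f = Inf (ereal ` {\<alpha>. \<exists>C\<alpha>>0. \<forall>\<Lambda>>1.
      Limsup at_top (\<lambda>x. SUP l\<in>{1..\<Lambda>}. ereal (f (l * x) / (l powr \<alpha> * f x)))
        \<le> ereal C\<alpha>})"

definition P_prop :: "(real \<Rightarrow> real) \<Rightarrow> real \<Rightarrow> bool" where
  "P_prop \<sigma> \<gamma> \<longleftrightarrow>
     (\<exists>K>1. Limsup at_top (\<lambda>t. ereal (\<sigma> (K powr \<gamma> * t) / \<sigma> t)) < ereal K)"

definition gamma_index :: "(real \<Rightarrow> real) \<Rightarrow> ereal" where
  "gamma_index \<sigma> =
     (if {\<gamma>. \<gamma> > 0 \<and> P_prop \<sigma> \<gamma>} = {} then 0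
      else Sup (ereal ` {\<gamma>. \<gamma> > 0 \<and> P_prop \<sigma> \<gamma>}))"

definition integral_condition :: "(real \<Rightarrow> real) \<Rightarrow> real \<Rightarrow> bool" where
  "integral_condition \<sigma> \<alpha> \<longleftrightarrow>
     (\<exists>C>0. \<forall>y>0. (\<integral>\<^sup>+ t\<in>{1..}. ennreal (\<sigma> (y * t) / t powr (1 + \<alpha>)) \<partial>lborel)
                    \<le> ennreal (C * \<sigma> y + C))"

end

theory Submission
  imports Defs
begin

lemma choose_big_nat:
  fixes \<gamma> \<beta> M B :: real
  assumes "0 < \<gamma>" "\<gamma> < \<beta>" "M > 0"
  shows "\<exists>n::nat. real n \<ge> B \<and> n \<ge> 2 \<and> M * real n powr \<gamma> < real n powr \<beta>"
proof -
  define c where "c = max (max B 2) ((2*M) powr (1/(\<beta>-\<gamma>)))"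
  define n where "n = nat \<lceil>c\<rceil>"
  have cn: "c \<le> real n" unfolding n_def by linarith
  have n2: "real n \<ge> 2" using cn unfolding c_def by linarith
  have "(2*M) powr (1/(\<beta>-\<gamma>)) \<le> real n" using cn unfolding c_def by linarith
  hence "((2*M) powr (1/(\<beta>-\<gamma>))) powr (\<beta>-\<gamma>) \<le> real n powr (\<beta>-\<gamma>)"
    by (intro powr_mono2) (use assms in auto)
  also have "((2*M) powr (1/(\<beta>-\<gamma>))) powr (\<beta>-\<gamma>) = 2*M"
    using assms by (simp add: powr_powr)
  finally have A: "2*M \<le> real n powr (\<beta>-\<gamma>)" .
  have "real n powr \<beta> = real n powr \<gamma> * real n powr (\<beta>-\<gamma>)"
    by (simp add: powr_add[symmetric])
  also have "\<dots> \<ge> real n powr \<gamma> * (2*M)"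
    using A n2 by (intro mult_left_mono) auto
  finally have "real n powr \<beta> \<ge> real n powr \<gamma> * (2*M)" .
  moreover have "real n powr \<gamma> > 0" using n2 by simp
  moreover have "M * real n powr \<gamma> < real n powr \<gamma> * (2*M)"
    using calculation(2) assms by simp
  ultimately have "M * real n powr \<gamma> < real n powr \<beta>" by linarith
  moreover have "n \<ge> 2" using n2 by linarith
  ultimately show ?thesis using cn unfolding c_def by (intro exI[of _ n]) auto
qed

locale sig =
  fixes \<sigma> :: "real \<Rightarrow> real" and \<alpha> a :: real
  assumes nonneg: "\<forall>t\<ge>0. \<sigma> t \<ge> 0"
    and mono: "mono_on {0..} \<sigma>"
    and lim: "filterlim \<sigma> at_top at_top"
    and alpha_pos: "\<alpha> > 0"
    and a_nonneg: "a \<ge> 0"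
    and pos: "\<forall>x\<ge>a. \<sigma> x > 0"
begin

lemma monoD': "0 \<le> x \<Longrightarrow> x \<le> y \<Longrightarrow> \<sigma> x \<le> \<sigma> y"
  using mono by (auto simp: mono_on_def)

lemma posD: "a \<le> x \<Longrightarrow> \<sigma> x > 0"
  using pos by auto

lemma nonnegD: "0 \<le> x \<Longrightarrow> \<sigma> x \<ge> 0"
  using nonneg by auto

lemma ev_pos: "\<forall>\<^sub>F t in at_top. \<sigma> t > 0"
  using eventually_ge_at_top[of a] by eventually_elim (rule posD)

definition hub :: "real \<Rightarrow> real \<Rightarrow> bool" where
  "hub \<gamma> M \<longleftrightarrow> 0 < \<gamma> \<and> \<gamma> < \<alpha> \<and> M > 0 \<and> (\<forall>x\<ge>a. \<forall>l\<ge>1. \<sigma> (l*x) \<le> M * l powr \<gamma> * \<sigma> x)"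

definition Hub where "Hub \<longleftrightarrow> (\<exists>\<gamma> M. hub \<gamma> M)"

definition EvIV where
  "EvIV \<longleftrightarrow> (\<exists>K>1. \<exists>\<rho>. \<rho> < K powr \<alpha> \<and> (\<forall>\<^sub>F t in at_top. \<sigma> (K*t) \<le> \<rho> * \<sigma> t))"

definition NatIV where
  "NatIV \<longleftrightarrow> (\<exists>k::nat. k \<ge> 2 \<and> (\<exists>\<rho>. \<rho> < real k powr \<alpha> \<and>
      (\<forall>\<^sub>F p in sequentially. \<sigma> (real k * real p) \<le> \<rho> * \<sigma> (real p))))"

lemma hub_lower:
  assumes "b \<ge> a" "0 < \<gamma>" "\<gamma> < \<alpha>" "M > 0"
    and H: "\<forall>x\<ge>b. \<forall>l\<ge>1. \<sigma> (l*x) \<le> M * l powr \<gamma> * \<sigma> x"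
  shows "Hub"
proof -
  have sa: "\<sigma> a > 0" "\<sigma> b > 0" using posD assms(1) by auto
  have sab: "\<sigma> a \<le> \<sigma> b" using monoD' a_nonneg assms(1) by auto
  define M' where "M' = M * \<sigma> b / \<sigma> a"
  have M'M: "M \<le> M'" unfolding M'_def using sa sab assms(4) by (simp add: field_simps)
  have "hub \<gamma> M'"
    unfolding hub_def
  proof (intro conjI allI impI)
    show "0 < M'" using M'M assms by linarith
    fix x l :: real assume x: "x \<ge> a" and l: "l \<ge> 1"
    have lp: "l powr \<gamma> > 0" using l by simp
    show "\<sigma> (l*x) \<le> M' * l powr \<gamma> * \<sigma> x"
    proof (cases "x \<ge> b")
      case True
      have "\<sigma> (l*x) \<le> M * l powr \<gamma> * \<sigma> x" using H True l by auto
      also have "\<dots> \<le> M' * l powr \<gamma> * \<sigma> x"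
        using M'M lp posD[OF x] by (intro mult_right_mono) auto
      finally show ?thesis .
    next
      case False
      have "\<sigma> (l*x) \<le> \<sigma> (l*b)" using False l x a_nonneg by (intro monoD') auto
      also have "\<dots> \<le> M * l powr \<gamma> * \<sigma> b" using H l by auto
      also have "\<dots> = M' * l powr \<gamma> * \<sigma> a" unfolding M'_def using sa by simp
      also have "\<dots> \<le> M' * l powr \<gamma> * \<sigma> x"
        using M'M assms(4) lp x a_nonneg by (intro mult_left_mono monoD') auto
      finally show ?thesis .
    qed
  qed (use assms in auto)
  thus ?thesis unfolding Hub_def by blast
qed

lemma iterate:
  assumes K: "K > 0" and S: "\<And>t. t \<in> S \<Longrightarrow> K*t \<in> S \<and> \<sigma> (K*t) \<le> \<rho> * \<sigma> t" and rho: "\<rho> \<ge> 0"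
  shows "t \<in> S \<Longrightarrow> \<sigma> (K^n*t) \<le> \<rho>^n * \<sigma> t \<and> K^n * t \<in> S"
proof (induction n)
  case 0 then show ?case by simp
next
  case (Suc n)
  then have IH: "\<sigma> (K^n*t) \<le> \<rho>^n * \<sigma> t" "K^n*t \<in> S" by auto
  have "\<sigma> (K^Suc n*t) = \<sigma> (K*(K^n*t))" by (simp add: algebra_simps)
  also have "\<dots> \<le> \<rho> * \<sigma> (K^n*t)" using S[OF IH(2)] by auto
  also have "\<dots> \<le> \<rho> * (\<rho>^n * \<sigma> t)" using IH(1) rho by (intro mult_left_mono) auto
  finally show ?case using S[OF IH(2)] by (simp add: algebra_simps)
qed

lemma pow_cover:
  fixes K l :: real
  assumes "K > 1" "l \<ge> 1"
  shows "\<exists>n::nat. l \<le> K^n \<and> K^n \<le> K * l"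
proof -
  define n where "n = nat \<lceil>log K l\<rceil>"
  have lg: "log K l \<ge> 0" using assms by simp
  have "K^n = K powr (real n)" using assms by (simp add: powr_realpow)
  moreover have "log K l \<le> real n" "real n < log K l + 1" unfolding n_def using lg by linarith+
  ultimately have "K powr (log K l) \<le> K^n" "K^n \<le> K powr (log K l + 1)"
    using assms by (metis less_eq_real_def powr_mono less_imp_le)+
  moreover have "K powr (log K l) = l" using assms by simp
  moreover have "K powr (log K l + 1) = l * K" using assms by (simp add: powr_add)
  ultimately show ?thesis by (intro exI[of _ n]) (auto simp: algebra_simps)
qed

lemma rho_adjust:
  assumes "K > 1" "\<rho> < K powr \<alpha>"
  shows "\<exists>\<rho>1. \<rho> \<le> \<rho>1 \<and> 1 < \<rho>1 \<and> \<rho>1 < K powr \<alpha> \<and> 0 < ln \<rho>1 / ln K \<and> ln \<rho>1 / ln K < \<alpha>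
     \<and> K powr (ln \<rho>1 / ln K) = \<rho>1"
proof -
  have K1: "K powr \<alpha> > 1" using assms alpha_pos by simp
  define \<rho>1 where "\<rho>1 = max \<rho> ((1 + K powr \<alpha>)/2)"
  have "1 < (1 + K powr \<alpha>)/2" "(1 + K powr \<alpha>)/2 < K powr \<alpha>" using K1 by auto
  hence r: "\<rho> \<le> \<rho>1" "1 < \<rho>1" "\<rho>1 < K powr \<alpha>" unfolding \<rho>1_def using assms
    by (auto simp: less_max_iff_disj)
  have lK: "ln K > 0" using assms by simp
  have "ln \<rho>1 < ln (K powr \<alpha>)" using r by (subst ln_less_cancel_iff) auto
  also have "ln (K powr \<alpha>) = \<alpha> * ln K" using assms by (simp add: ln_powr)
  finally have "ln \<rho>1 / ln K < \<alpha>" using lK by (simp add: field_simps)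
  moreover have "0 < ln \<rho>1 / ln K" using r lK by simp
  moreover have "K powr (ln \<rho>1 / ln K) = \<rho>1"
    using assms r by (simp add: powr_def)
  ultimately show ?thesis using r by blast
qed

lemma EvIV_Hub:
  assumes "EvIV" shows "Hub"
proof -
  obtain K \<rho> where K: "K > 1" "\<rho> < K powr \<alpha>" and ev: "\<forall>\<^sub>F t in at_top. \<sigma> (K*t) \<le> \<rho> * \<sigma> t"
    using assms unfolding EvIV_def by blast
  obtain \<rho>1 where r: "\<rho> \<le> \<rho>1" "1 < \<rho>1" "\<rho>1 < K powr \<alpha>" "0 < ln \<rho>1 / ln K" "ln \<rho>1 / ln K < \<alpha>"
      "K powr (ln \<rho>1 / ln K) = \<rho>1"
    using rho_adjust[OF K] by blast
  define \<gamma> where "\<gamma> = ln \<rho>1 / ln K"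
  obtain T0 where T0: "\<And>t. t \<ge> T0 \<Longrightarrow> \<sigma> (K*t) \<le> \<rho> * \<sigma> t"
    using ev unfolding eventually_at_top_linorder by blast
  define T where "T = max T0 a"
  have T: "T \<ge> a" "T \<ge> 0" unfolding T_def using a_nonneg by auto
  have step: "K*t \<in> {T..} \<and> \<sigma> (K*t) \<le> \<rho>1 * \<sigma> t" if "t \<in> {T..}" for t
  proof -
    have t: "t \<ge> T0" "t \<ge> a" "t \<ge> 0" using that T unfolding T_def by auto
    have "K*t \<ge> t" using K t by (simp add: mult_le_cancel_right1 )
    hence "K*t \<in> {T..}" using that by auto
    moreover have "\<sigma> (K*t) \<le> \<rho>1 * \<sigma> t" using T0[OF t(1)] r(1) posD[OF t(2)]
      by (smt (verit) mult_right_mono)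
    ultimately show ?thesis by blast
  qed
  have H: "\<forall>x\<ge>T. \<forall>l\<ge>1. \<sigma> (l*x) \<le> K powr \<gamma> * l powr \<gamma> * \<sigma> x"
  proof (intro allI impI)
    fix x l :: real assume x: "x \<ge> T" and l: "l \<ge> 1"
    obtain n where n: "l \<le> K^n" "K^n \<le> K*l" using pow_cover[OF K(1) l] by blast
    have it: "\<sigma> (K^n*x) \<le> \<rho>1^n * \<sigma> x"
      using iterate[of K "{T..}" \<rho>1 x n] step K r x by auto
    have "\<sigma> (l*x) \<le> \<sigma> (K^n*x)" using n x T l by (intro monoD' mult_right_mono) auto
    also have "\<dots> \<le> \<rho>1^n * \<sigma> x" by (rule it)
    also have "\<rho>1^n = (K^n) powr \<gamma>"
    proof -
      have "(K^n) powr \<gamma> = (K powr real n) powr \<gamma>" using K by (simp add: powr_realpow)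
      also have "\<dots> = (K powr \<gamma>) powr real n" by (simp add: powr_powr mult.commute)
      also have "\<dots> = \<rho>1 powr real n" using r unfolding \<gamma>_def by simp
      also have "\<dots> = \<rho>1^n" using r by (simp add: powr_realpow)
      finally show ?thesis by simp
    qed
    also have "(K^n) powr \<gamma> \<le> (K*l) powr \<gamma>" using n r K unfolding \<gamma>_def by (intro powr_mono2) auto
    also have "(K*l) powr \<gamma> = K powr \<gamma> * l powr \<gamma>" using K l by (simp add: powr_mult)
    finally show "\<sigma> (l*x) \<le> K powr \<gamma> * l powr \<gamma> * \<sigma> x"
      using posD[of x] x T by (smt (verit) mult_right_mono)
  qed
  show ?thesis using hub_lower[OF T(1) _ _ _ H] r K unfolding \<gamma>_def by auto
qed

end

context sig
begin

lemma NatIV_Hub: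
  assumes "NatIV" shows "Hub"
proof -
  obtain k :: nat and \<rho> where k: "k \<ge> 2" "\<rho> < real k powr \<alpha>"
    and ev: "\<forall>\<^sub>F p in sequentially. \<sigma> (real k * real p) \<le> \<rho> * \<sigma> (real p)"
    using assms unfolding NatIV_def by blast
  define K where "K = real k"
  have K: "K > 1" using k unfolding K_def by simp
  obtain \<rho>1 where r: "\<rho> \<le> \<rho>1" "1 < \<rho>1" "\<rho>1 < K powr \<alpha>" "0 < ln \<rho>1 / ln K" "ln \<rho>1 / ln K < \<alpha>"
      "K powr (ln \<rho>1 / ln K) = \<rho>1"
    using rho_adjust[OF K] k unfolding K_def by blast
  define \<gamma> where "\<gamma> = ln \<rho>1 / ln K"
  obtain P0 where P0: "\<And>p. p \<ge> P0 \<Longrightarrow> \<sigma> (real k * real p) \<le> \<rho> * \<sigma> (real p)"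
    using ev unfolding eventually_sequentially by blast
  define P where "P = max P0 (nat \<lceil>a\<rceil> + 1)"
  have Pa: "real P \<ge> a" "P \<ge> 1" unfolding P_def by linarith+
  define S where "S = real ` {P..}"
  have step: "K*t \<in> S \<and> \<sigma> (K*t) \<le> \<rho>1 * \<sigma> t" if tS: "t \<in> S" for t
  proof -
    obtain p where p: "t = real p" "p \<ge> P" using tS unfolding S_def by blast
    have "k*p \<ge> p" using k by simp
    hence "K*t \<in> S" unfolding S_def K_def p(1) using p(2)
      by (metis atLeast_iff image_eqI le_trans of_nat_mult)
    moreover have "\<sigma> (K*t) \<le> \<rho>1 * \<sigma> t"
    proof -
      have "\<sigma> (K*t) \<le> \<rho> * \<sigma> t" using P0[of p] p unfolding P_def K_def by auto
      moreover have "\<sigma> t > 0" using posD Pa p by auto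
      ultimately show ?thesis using r(1) by (smt (verit) mult_right_mono)
    qed
    ultimately show ?thesis by blast
  qed
  have H: "\<forall>x\<ge>real P. \<forall>l\<ge>1. \<sigma> (l*x) \<le> (2*K) powr \<gamma> * l powr \<gamma> * \<sigma> x"
  proof (intro allI impI)
    fix x l :: real assume x: "x \<ge> real P" and l: "l \<ge> 1"
    define p where "p = nat \<lfloor>x\<rfloor>"
    have fl: "real_of_int \<lfloor>x\<rfloor> \<le> x" "x < real_of_int \<lfloor>x\<rfloor> + 1" by linarith+
    have f1: "\<lfloor>x\<rfloor> \<ge> int P" using x by linarith
    have rp: "real p = real_of_int \<lfloor>x\<rfloor>" unfolding p_def using f1 by simp
    have p: "p \<ge> P" "real p \<le> x" "x \<le> 2 * real p" unfolding p_def using x Pa fl f1 rp[unfolded p_def] by linarith+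
    have pS: "real p \<in> S" using p unfolding S_def by auto
    obtain n where n: "2*l \<le> K^n" "K^n \<le> K * (2*l)" using pow_cover[OF K, of "2*l"] l by auto
    have it: "\<sigma> (K^n*real p) \<le> \<rho>1^n * \<sigma> (real p)"
      using iterate[of K S \<rho>1 "real p" n] step K r pS by auto
    have "\<sigma> (l*x) \<le> \<sigma> ((2*l) * real p)" using p l x Pa by (intro monoD') (auto simp: mult_left_mono)
    also have "\<dots> \<le> \<sigma> (K^n*real p)" using n p l Pa by (intro monoD' mult_right_mono) auto
    also have "\<dots> \<le> \<rho>1^n * \<sigma> (real p)" by (rule it)
    also have "\<dots> \<le> \<rho>1^n * \<sigma> x" using r p Pa by (intro mult_left_mono monoD') auto
    also have "\<rho>1^n = (K^n) powr \<gamma>"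
    proof -
      have "(K^n) powr \<gamma> = (K powr real n) powr \<gamma>" using K by (simp add: powr_realpow)
      also have "\<dots> = (K powr \<gamma>) powr real n" by (simp add: powr_powr mult.commute)
      also have "\<dots> = \<rho>1 powr real n" using r unfolding \<gamma>_def by simp
      also have "\<dots> = \<rho>1^n" using r by (simp add: powr_realpow)
      finally show ?thesis by simp
    qed
    also have "(K^n) powr \<gamma> \<le> (K*(2*l)) powr \<gamma>" using n r K unfolding \<gamma>_def by (intro powr_mono2) auto
    also have "(K*(2*l)) powr \<gamma> = (2*K) powr \<gamma> * l powr \<gamma>" using K l by (simp add: powr_mult[symmetric] algebra_simps)
    finally show "\<sigma> (l*x) \<le> (2*K) powr \<gamma> * l powr \<gamma> * \<sigma> x"
      using posD[of x] x Pa by (smt (verit) mult_right_mono)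
  qed
  show ?thesis using hub_lower[OF Pa(1) _ _ _ H] r K unfolding \<gamma>_def by auto
qed

lemma Hub_EvIV: assumes "Hub" shows "EvIV"
proof -
  obtain \<gamma> M where h: "hub \<gamma> M" using assms unfolding Hub_def by blast
  hence g: "0 < \<gamma>" "\<gamma> < \<alpha>" "M > 0" and H: "\<forall>x\<ge>a. \<forall>l\<ge>1. \<sigma> (l*x) \<le> M * l powr \<gamma> * \<sigma> x"
    unfolding hub_def by auto
  obtain n :: nat where n: "n \<ge> 2" "M * real n powr \<gamma> < real n powr \<alpha>"
    using choose_big_nat[OF g(1,2,3), of 0] by auto
  have "\<forall>\<^sub>F t in at_top. \<sigma> (real n*t) \<le> (M * real n powr \<gamma>) * \<sigma> t"
    using eventually_ge_at_top[of a] by eventually_elim (use H n in auto)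
  thus ?thesis unfolding EvIV_def using n by (intro exI[of _ "real n"]) auto
qed

lemma Hub_NatIV: assumes "Hub" shows "NatIV"
proof -
  obtain \<gamma> M where h: "hub \<gamma> M" using assms unfolding Hub_def by blast
  hence g: "0 < \<gamma>" "\<gamma> < \<alpha>" "M > 0" and H: "\<forall>x\<ge>a. \<forall>l\<ge>1. \<sigma> (l*x) \<le> M * l powr \<gamma> * \<sigma> x"
    unfolding hub_def by auto
  obtain n :: nat where n: "n \<ge> 2" "M * real n powr \<gamma> < real n powr \<alpha>"
    using choose_big_nat[OF g(1,2,3), of 0] by auto
  have "\<forall>\<^sub>F p in sequentially. \<sigma> (real n*real p) \<le> (M * real n powr \<gamma>) * \<sigma> (real p)"
    using eventually_ge_at_top[of "nat \<lceil>a\<rceil>"]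
  proof eventually_elim
    case (elim p) then have "real p \<ge> a" by linarith
    then show ?case using H n by auto
  qed
  thus ?thesis unfolding NatIV_def using n by (intro exI[of _ n]) auto
qed

lemma Hub_iff_EvIV: "Hub \<longleftrightarrow> EvIV" using Hub_EvIV EvIV_Hub by blast
lemma Hub_iff_NatIV: "Hub \<longleftrightarrow> NatIV" using Hub_NatIV NatIV_Hub by blast

lemma cond_iv_EvIV:
  "(\<exists>K>1. Limsup at_top (\<lambda>t. ereal (\<sigma> (K * t) / \<sigma> t)) < ereal (K powr \<alpha>)) \<longleftrightarrow> EvIV"
proof
  assume "\<exists>K>1. Limsup at_top (\<lambda>t. ereal (\<sigma> (K * t) / \<sigma> t)) < ereal (K powr \<alpha>)"
  then obtain K where K: "K > 1" "Limsup at_top (\<lambda>t. ereal (\<sigma> (K * t) / \<sigma> t)) < ereal (K powr \<alpha>)" by blast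
  obtain z where z: "Limsup at_top (\<lambda>t. ereal (\<sigma> (K * t) / \<sigma> t)) < ereal z" "ereal z < ereal (K powr \<alpha>)"
    using ereal_dense2[OF K(2)] by blast
  have "\<forall>\<^sub>F t in at_top. ereal (\<sigma> (K * t) / \<sigma> t) < ereal z" using Limsup_lessD[OF z(1)] .
  hence "\<forall>\<^sub>F t in at_top. \<sigma> (K*t) \<le> z * \<sigma> t"
    using ev_pos by eventually_elim (auto simp: divide_less_eq)
  thus EvIV unfolding EvIV_def using K z by auto
next
  assume EvIV
  then obtain K \<rho> where K: "K > 1" "\<rho> < K powr \<alpha>" and ev: "\<forall>\<^sub>F t in at_top. \<sigma> (K*t) \<le> \<rho> * \<sigma> t"
    unfolding EvIV_def by blast
  have "\<forall>\<^sub>F t in at_top. ereal (\<sigma> (K * t) / \<sigma> t) \<le> ereal \<rho>"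
    using ev ev_pos by eventually_elim (auto simp: divide_le_eq)
  hence "Limsup at_top (\<lambda>t. ereal (\<sigma> (K * t) / \<sigma> t)) \<le> ereal \<rho>" by (rule Limsup_bounded)
  also have "\<dots> < ereal (K powr \<alpha>)" using K by simp
  finally show "\<exists>K>1. Limsup at_top (\<lambda>t. ereal (\<sigma> (K * t) / \<sigma> t)) < ereal (K powr \<alpha>)" using K by blast
qed

lemma ev_pos_nat: "\<forall>\<^sub>F p in sequentially. \<sigma> (real p) > 0"
  using eventually_ge_at_top[of "nat \<lceil>a\<rceil>"] by eventually_elim (rule posD, linarith)

lemma cond_xi_NatIV:
  "(\<exists>k::nat. k \<ge> 2 \<and>
         limsup (\<lambda>p::nat. ereal (\<sigma> (real k * real p) / \<sigma> (real p))) < ereal (real k powr \<alpha>)) \<longleftrightarrow> NatIV"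
proof
  assume "\<exists>k::nat. k \<ge> 2 \<and>
         limsup (\<lambda>p::nat. ereal (\<sigma> (real k * real p) / \<sigma> (real p))) < ereal (real k powr \<alpha>)"
  then obtain k :: nat where K: "k \<ge> 2" "limsup (\<lambda>p::nat. ereal (\<sigma> (real k * real p) / \<sigma> (real p))) < ereal (real k powr \<alpha>)" by blast
  obtain z where z: "limsup (\<lambda>p::nat. ereal (\<sigma> (real k * real p) / \<sigma> (real p))) < ereal z" "ereal z < ereal (real k powr \<alpha>)"
    using ereal_dense2[OF K(2)] by blast
  have "\<forall>\<^sub>F p in sequentially. ereal (\<sigma> (real k * real p) / \<sigma> (real p)) < ereal z" using Limsup_lessD[OF z(1)] .
  hence "\<forall>\<^sub>F p in sequentially. \<sigma> (real k * real p) \<le> z * \<sigma> (real p)"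
    using ev_pos_nat by eventually_elim (auto simp: divide_less_eq)
  thus NatIV unfolding NatIV_def using K z by auto
next
  assume NatIV
  then obtain k :: nat and \<rho> where K: "k \<ge> 2" "\<rho> < real k powr \<alpha>"
    and ev: "\<forall>\<^sub>F p in sequentially. \<sigma> (real k * real p) \<le> \<rho> * \<sigma> (real p)"
    unfolding NatIV_def by blast
  have "\<forall>\<^sub>F p in sequentially. ereal (\<sigma> (real k * real p) / \<sigma> (real p)) \<le> ereal \<rho>"
    using ev ev_pos_nat by eventually_elim (auto simp: divide_le_eq)
  hence "limsup (\<lambda>p::nat. ereal (\<sigma> (real k * real p) / \<sigma> (real p))) \<le> ereal \<rho>" by (rule Limsup_bounded)
  also have "\<dots> < ereal (real k powr \<alpha>)" using K by simp
  finally show "\<exists>k::nat. k \<ge> 2 \<and>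
         limsup (\<lambda>p::nat. ereal (\<sigma> (real k * real p) / \<sigma> (real p))) < ereal (real k powr \<alpha>)" using K by blast
qed

lemma cond_vii_Hub:
  "(\<exists>\<gamma>. 0 < \<gamma> \<and> \<gamma> < \<alpha> \<and>
         (a > 0 \<longrightarrow> almost_decreasing_from a (\<lambda>t. \<sigma> t / t powr \<gamma>)) \<and>
         (a = 0 \<longrightarrow> (\<forall>\<epsilon>>0. almost_decreasing_from \<epsilon> (\<lambda>t. \<sigma> t / t powr \<gamma>)))) \<longleftrightarrow> Hub"
proof
  assume "\<exists>\<gamma>. 0 < \<gamma> \<and> \<gamma> < \<alpha> \<and>
         (a > 0 \<longrightarrow> almost_decreasing_from a (\<lambda>t. \<sigma> t / t powr \<gamma>)) \<and>
         (a = 0 \<longrightarrow> (\<forall>\<epsilon>>0. almost_decreasing_from \<epsilon> (\<lambda>t. \<sigma> t / t powr \<gamma>)))"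
  then obtain \<gamma> where g: "0 < \<gamma>" "\<gamma> < \<alpha>"
    and A: "a > 0 \<longrightarrow> almost_decreasing_from a (\<lambda>t. \<sigma> t / t powr \<gamma>)"
    and B: "a = 0 \<longrightarrow> (\<forall>\<epsilon>>0. almost_decreasing_from \<epsilon> (\<lambda>t. \<sigma> t / t powr \<gamma>))" by blast
  define b where "b = (if a > 0 then a else 1)"
  have b: "b \<ge> a" "b > 0" "almost_decreasing_from b (\<lambda>t. \<sigma> t / t powr \<gamma>)"
    using A B a_nonneg unfolding b_def by auto
  then obtain m where m: "m > 0" "\<And>x y. b \<le> x \<Longrightarrow> x \<le> y \<Longrightarrow> m * (\<sigma> y / y powr \<gamma>) \<le> \<sigma> x / x powr \<gamma>"
    unfolding almost_decreasing_from_def by blast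
  have H: "\<forall>x\<ge>b. \<forall>l\<ge>1. \<sigma> (l*x) \<le> (1/m) * l powr \<gamma> * \<sigma> x"
  proof (intro allI impI)
    fix x l :: real assume x: "x \<ge> b" and l: "l \<ge> 1"
    have xp: "x > 0" using x b by auto
    have "x \<le> l*x" using l xp by simp
    from m(2)[OF x this] have "m * (\<sigma> (l*x) / (l*x) powr \<gamma>) \<le> \<sigma> x / x powr \<gamma>" .
    moreover have "(l*x) powr \<gamma> = l powr \<gamma> * x powr \<gamma>" using l xp by (simp add: powr_mult)
    moreover have "x powr \<gamma> > 0" "l powr \<gamma> > 0" using xp l by auto
    ultimately have "m * \<sigma> (l*x) \<le> l powr \<gamma> * \<sigma> x" by (simp add: field_simps)
    thus "\<sigma> (l*x) \<le> (1/m) * l powr \<gamma> * \<sigma> x" using m(1) by (simp add: field_simps)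
  qed
  show Hub using hub_lower[OF b(1) g _ H] m by auto
next
  assume Hub
  then obtain \<gamma> M where "hub \<gamma> M" unfolding Hub_def by blast
  hence g: "0 < \<gamma>" "\<gamma> < \<alpha>" "M > 0" and H: "\<forall>x\<ge>a. \<forall>l\<ge>1. \<sigma> (l*x) \<le> M * l powr \<gamma> * \<sigma> x"
    unfolding hub_def by auto
  have AD: "almost_decreasing_from b (\<lambda>t. \<sigma> t / t powr \<gamma>)" if b: "b \<ge> a" "b > 0" for b
    unfolding almost_decreasing_from_def
  proof (intro exI[of _ "1/M"] conjI allI impI)
    show "1/M > 0" using g by simp
    fix x y :: real assume x: "b \<le> x" and xy: "x \<le> y"
    have xp: "x > 0" using x b by auto
    have "\<sigma> y = \<sigma> ((y/x)*x)" using xp by simp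
    also have "\<dots> \<le> M * (y/x) powr \<gamma> * \<sigma> x" using H[rule_format, of x "y/x"] x b xy xp by auto
    finally have "\<sigma> y \<le> M * (y/x) powr \<gamma> * \<sigma> x" .
    moreover have "(y/x) powr \<gamma> = y powr \<gamma> / x powr \<gamma>" using xp xy by (simp add: powr_divide)
    moreover have "x powr \<gamma> > 0" "y powr \<gamma> > 0" using xp xy by auto
    ultimately show "1/M * (\<sigma> y / y powr \<gamma>) \<le> \<sigma> x / x powr \<gamma>" using g by (simp add: field_simps)
  qed
  show "\<exists>\<gamma>. 0 < \<gamma> \<and> \<gamma> < \<alpha> \<and>
         (a > 0 \<longrightarrow> almost_decreasing_from a (\<lambda>t. \<sigma> t / t powr \<gamma>)) \<and>
         (a = 0 \<longrightarrow> (\<forall>\<epsilon>>0. almost_decreasing_from \<epsilon> (\<lambda>t. \<sigma> t / t powr \<gamma>)))"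
    using AD g by (intro exI[of _ \<gamma>]) auto
qed

lemma cond_x_Hub:
  "(\<forall>\<theta>. 0 < \<theta> \<and> \<theta> < 1 \<longrightarrow> (\<exists>k::nat. k \<ge> 2 \<and>
         (\<forall>p::nat. p \<ge> nat \<lceil>a\<rceil> + 1 \<longrightarrow>
            \<sigma> (real k * real p) \<le> \<theta> * real k powr \<alpha> * \<sigma> (real p)))) \<longleftrightarrow> Hub"
proof
  assume A: "\<forall>\<theta>. 0 < \<theta> \<and> \<theta> < 1 \<longrightarrow> (\<exists>k::nat. k \<ge> 2 \<and>
         (\<forall>p::nat. p \<ge> nat \<lceil>a\<rceil> + 1 \<longrightarrow>
            \<sigma> (real k * real p) \<le> \<theta> * real k powr \<alpha> * \<sigma> (real p)))"
  then obtain k :: nat where k: "k \<ge> 2" and kp: "\<forall>p::nat. p \<ge> nat \<lceil>a\<rceil> + 1 \<longrightarrow>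
            \<sigma> (real k * real p) \<le> 1/2 * real k powr \<alpha> * \<sigma> (real p)"
    using spec[OF A, of "1/2"] by auto
  have "\<forall>\<^sub>F p in sequentially. \<sigma> (real k * real p) \<le> (1/2 * real k powr \<alpha>) * \<sigma> (real p)"
    using eventually_ge_at_top[of "nat \<lceil>a\<rceil> + 1"] by eventually_elim (use kp in auto)
  moreover have "1/2 * real k powr \<alpha> < real k powr \<alpha>" using k by simp
  ultimately have NatIV unfolding NatIV_def using k by blast
  thus Hub using NatIV_Hub by blast
next
  assume Hub
  then obtain \<gamma> M where "hub \<gamma> M" unfolding Hub_def by blast
  hence g: "0 < \<gamma>" "\<gamma> < \<alpha>" "M > 0" and H: "\<forall>x\<ge>a. \<forall>l\<ge>1. \<sigma> (l*x) \<le> M * l powr \<gamma> * \<sigma> x"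
    unfolding hub_def by auto
  show "\<forall>\<theta>. 0 < \<theta> \<and> \<theta> < 1 \<longrightarrow> (\<exists>k::nat. k \<ge> 2 \<and>
         (\<forall>p::nat. p \<ge> nat \<lceil>a\<rceil> + 1 \<longrightarrow>
            \<sigma> (real k * real p) \<le> \<theta> * real k powr \<alpha> * \<sigma> (real p)))"
  proof (intro allI impI)
    fix \<theta> :: real assume th: "0 < \<theta> \<and> \<theta> < 1"
    obtain n :: nat where n: "n \<ge> 2" "(M/\<theta>) * real n powr \<gamma> < real n powr \<alpha>"
      using choose_big_nat[OF g(1,2), of "M/\<theta>" 0] g th by auto
    have n': "M * real n powr \<gamma> \<le> \<theta> * real n powr \<alpha>"
      using n(2) th by (simp add: field_simps)
    show "\<exists>k::nat. k \<ge> 2 \<and> (\<forall>p::nat. p \<ge> nat \<lceil>a\<rceil> + 1 \<longrightarrow>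
            \<sigma> (real k * real p) \<le> \<theta> * real k powr \<alpha> * \<sigma> (real p))"
    proof (intro exI[of _ n] conjI allI impI)
      fix p :: nat assume p: "p \<ge> nat \<lceil>a\<rceil> + 1"
      hence pa: "real p \<ge> a" by linarith
      have "\<sigma> (real n * real p) \<le> M * real n powr \<gamma> * \<sigma> (real p)" using H pa n by auto
      also have "\<dots> \<le> \<theta> * real n powr \<alpha> * \<sigma> (real p)"
        using n' posD[OF pa] by (intro mult_right_mono) auto
      finally show "\<sigma> (real n * real p) \<le> \<theta> * real n powr \<alpha> * \<sigma> (real p)" .
    qed (use n in auto)
  qed
qed

end

context sig
begin

lemma cond_iii_Hub:
  "((\<lambda>\<epsilon>. Limsup at_top (\<lambda>t. ereal (\<epsilon> powr \<alpha> * \<sigma> t / \<sigma> (\<epsilon> * t))))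
         \<longlongrightarrow> 0) (at_right 0) \<longleftrightarrow> Hub"
proof
  assume L: "((\<lambda>\<epsilon>. Limsup at_top (\<lambda>t. ereal (\<epsilon> powr \<alpha> * \<sigma> t / \<sigma> (\<epsilon> * t))))
         \<longlongrightarrow> 0) (at_right 0)"
  have "\<forall>\<^sub>F \<epsilon> in at_right 0. Limsup at_top (\<lambda>t. ereal (\<epsilon> powr \<alpha> * \<sigma> t / \<sigma> (\<epsilon> * t))) < ereal (1/2)"
    using order_tendstoD(2)[OF L, of "ereal (1/2)"] by (simp add: zero_ereal_def)
  moreover have "\<forall>\<^sub>F \<epsilon> in at_right (0::real). \<epsilon> < 1"
    using order_tendstoD(2)[OF tendsto_ident_at[of "0::real" "{0<..}"], of 1] by simp
  moreover have "\<forall>\<^sub>F \<epsilon> in at_right (0::real). 0 < \<epsilon>" by (rule eventually_at_right_less)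
  ultimately have evE: "\<forall>\<^sub>F \<epsilon> in at_right (0::real). 0 < \<epsilon> \<and> \<epsilon> < 1 \<and>
      Limsup at_top (\<lambda>t. ereal (\<epsilon> powr \<alpha> * \<sigma> t / \<sigma> (\<epsilon> * t))) < ereal (1/2)"
    by eventually_elim auto
  obtain \<epsilon> where e: "0 < \<epsilon>" "\<epsilon> < 1"
    "Limsup at_top (\<lambda>t. ereal (\<epsilon> powr \<alpha> * \<sigma> t / \<sigma> (\<epsilon> * t))) < ereal (1/2)"
    using eventually_happens'[OF _ evE] trivial_limit_at_right_real[of "0::real"] by (auto simp only: trivial_limit_def)
  obtain T where T: "\<And>t. t \<ge> T \<Longrightarrow> ereal (\<epsilon> powr \<alpha> * \<sigma> t / \<sigma> (\<epsilon> * t)) < ereal (1/2)"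
    using Limsup_lessD[OF e(3)] unfolding eventually_at_top_linorder by blast
  define K where "K = 1/\<epsilon>"
  have K: "K > 1" using e unfolding K_def by simp
  have "\<forall>\<^sub>F u in at_top. \<sigma> (K*u) \<le> (K powr \<alpha> / 2) * \<sigma> u"
    using eventually_ge_at_top[of "max (\<epsilon>*T) a"]
  proof eventually_elim
    case (elim u)
    have sa: "u \<ge> a" "\<sigma> u > 0" using elim posD by auto
    have "K*u \<ge> T" using elim e unfolding K_def by (simp add: field_simps)
    from T[OF this] have "\<epsilon> powr \<alpha> * \<sigma> (K*u) / \<sigma> u < 1/2"
      using e unfolding K_def by simp
    hence "\<epsilon> powr \<alpha> * \<sigma> (K*u) < \<sigma> u / 2" using sa by (simp add: divide_less_eq)
    moreover have "\<epsilon> powr \<alpha> * K powr \<alpha> = 1" using e unfolding K_def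
      by (simp add: powr_divide)
    ultimately have "K powr \<alpha> * (\<epsilon> powr \<alpha> * \<sigma> (K*u)) \<le> K powr \<alpha> * (\<sigma> u / 2)"
      by (intro mult_left_mono) auto
    moreover have "K powr \<alpha> * (\<epsilon> powr \<alpha> * \<sigma> (K*u)) = \<sigma> (K*u)"
      using \<open>\<epsilon> powr \<alpha> * K powr \<alpha> = 1\<close> by (metis mult.assoc mult.commute mult_1)
    ultimately show ?case by (simp add: algebra_simps)
  qed
  moreover have "K powr \<alpha> / 2 < K powr \<alpha>" using K by simp
  ultimately have EvIV unfolding EvIV_def using K by blast
  thus Hub using EvIV_Hub by blast
next
  assume Hub
  then obtain \<gamma> M where "hub \<gamma> M" unfolding Hub_def by blast
  hence g: "0 < \<gamma>" "\<gamma> < \<alpha>" "M > 0" and H: "\<forall>x\<ge>a. \<forall>l\<ge>1. \<sigma> (l*x) \<le> M * l powr \<gamma> * \<sigma> x"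
    unfolding hub_def by auto
  define g where "g = (\<lambda>\<epsilon>. Limsup at_top (\<lambda>t. ereal (\<epsilon> powr \<alpha> * \<sigma> t / \<sigma> (\<epsilon> * t))))"
  have bnd: "0 \<le> g \<epsilon> \<and> g \<epsilon> \<le> ereal (M * \<epsilon> powr (\<alpha> - \<gamma>))" if e: "0 < \<epsilon>" "\<epsilon> < 1" for \<epsilon>
  proof -
    have ev: "\<forall>\<^sub>F t in at_top. 0 \<le> ereal (\<epsilon> powr \<alpha> * \<sigma> t / \<sigma> (\<epsilon> * t)) \<and>
                  ereal (\<epsilon> powr \<alpha> * \<sigma> t / \<sigma> (\<epsilon> * t)) \<le> ereal (M * \<epsilon> powr (\<alpha> - \<gamma>))"
      using eventually_ge_at_top[of "a/\<epsilon>"]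
    proof eventually_elim
      case (elim t)
      have et: "\<epsilon>*t \<ge> a" using elim e by (simp add: field_simps)
      have t0: "t \<ge> 0" using et e a_nonneg by (metis order.trans zero_le_mult_iff not_less)
      have sp: "\<sigma> (\<epsilon>*t) > 0" using posD[OF et] .
      have e1: "1 \<le> 1/\<epsilon>" using e by simp
      have "\<sigma> t = \<sigma> ((1/\<epsilon>) * (\<epsilon>*t))" using e by simp
      also have "\<dots> \<le> M * (1/\<epsilon>) powr \<gamma> * \<sigma> (\<epsilon>*t)" by (rule H[rule_format, OF et e1])
      finally have "\<epsilon> powr \<alpha> * \<sigma> t \<le> \<epsilon> powr \<alpha> * (M * (1/\<epsilon>) powr \<gamma> * \<sigma> (\<epsilon>*t))"
        by (intro mult_left_mono) auto
      also have "\<epsilon> powr \<alpha> * (M * (1/\<epsilon>) powr \<gamma> * \<sigma> (\<epsilon>*t)) = M * \<epsilon> powr (\<alpha> - \<gamma>) * \<sigma> (\<epsilon>*t)"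
        using e by (simp add: powr_divide powr_diff field_simps)
      finally have "\<epsilon> powr \<alpha> * \<sigma> t / \<sigma> (\<epsilon> * t) \<le> M * \<epsilon> powr (\<alpha> - \<gamma>)"
        using sp by (simp add: divide_le_eq)
      moreover have "0 \<le> \<epsilon> powr \<alpha> * \<sigma> t / \<sigma> (\<epsilon> * t)" using sp nonnegD[OF t0] by simp
      ultimately show ?case by simp
    qed
    have "0 \<le> g \<epsilon>" unfolding g_def
      by (rule le_Limsup) (use ev in \<open>auto elim: eventually_mono\<close>)
    moreover have "g \<epsilon> \<le> ereal (M * \<epsilon> powr (\<alpha> - \<gamma>))" unfolding g_def
      by (rule Limsup_bounded) (use ev in \<open>auto elim: eventually_mono\<close>)
    ultimately show ?thesis by simp
  qed
  have ev: "\<forall>\<^sub>F \<epsilon> in at_right (0::real). 0 \<le> g \<epsilon> \<and> g \<epsilon> \<le> ereal (M * \<epsilon> powr (\<alpha> - \<gamma>))"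
  proof -
    have "\<forall>\<^sub>F \<epsilon> in at_right (0::real). \<epsilon> < 1"
      using order_tendstoD(2)[OF tendsto_ident_at[of "0::real" "{0<..}"], of 1] by simp
    moreover have "\<forall>\<^sub>F \<epsilon> in at_right (0::real). 0 < \<epsilon>" by (rule eventually_at_right_less)
    ultimately show ?thesis by eventually_elim (use bnd in auto)
  qed
  have lim0: "((\<lambda>\<epsilon>. M * \<epsilon> powr (\<alpha> - \<gamma>)) \<longlongrightarrow> 0) (at_right (0::real))"
  proof -
    have "((\<lambda>\<epsilon>::real. \<epsilon> powr (\<alpha> - \<gamma>)) \<longlongrightarrow> 0) (at_right 0)"
      by (rule tendsto_zero_powrI[of _ _ _ "\<alpha> - \<gamma>"]) (use g in \<open>auto intro: tendsto_ident_at eventually_at_right_less[THEN eventually_mono]\<close>)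
    thus ?thesis using tendsto_mult_right_zero by auto
  qed
  hence lim0': "((\<lambda>\<epsilon>. ereal (M * \<epsilon> powr (\<alpha> - \<gamma>))) \<longlongrightarrow> 0) (at_right (0::real))"
    by (simp add: zero_ereal_def)
  have "(g \<longlongrightarrow> 0) (at_right 0)"
    by (rule tendsto_sandwich[OF _ _ tendsto_const lim0']) (use ev in \<open>auto elim: eventually_mono\<close>)
  thus "((\<lambda>\<epsilon>. Limsup at_top (\<lambda>t. ereal (\<epsilon> powr \<alpha> * \<sigma> t / \<sigma> (\<epsilon> * t))))
         \<longlongrightarrow> 0) (at_right 0)" unfolding g_def .
qed

lemma gamma_index_iff:
  "gamma_index \<sigma> > ereal (1 / \<alpha>) \<longleftrightarrow> (\<exists>\<gamma>>1/\<alpha>. P_prop \<sigma> \<gamma>)"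
proof (cases "{\<gamma>. \<gamma> > 0 \<and> P_prop \<sigma> \<gamma>} = {}")
  case True
  have "\<not> (\<exists>\<gamma>>1/\<alpha>. P_prop \<sigma> \<gamma>)"
  proof
    assume "\<exists>\<gamma>>1/\<alpha>. P_prop \<sigma> \<gamma>"
    then obtain \<gamma> where "\<gamma> > 1/\<alpha>" "P_prop \<sigma> \<gamma>" by blast
    moreover have "1/\<alpha> > 0" using alpha_pos by simp
    ultimately have "\<gamma> > 0" by linarith
    thus False using True \<open>P_prop \<sigma> \<gamma>\<close> by blast
  qed
  moreover have "\<not> gamma_index \<sigma> > ereal (1/\<alpha>)"
    unfolding gamma_index_def using True alpha_pos by simp
  ultimately show ?thesis by blast
next
  case False
  have eq: "gamma_index \<sigma> = Sup (ereal ` {\<gamma>. \<gamma> > 0 \<and> P_prop \<sigma> \<gamma>})"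
    unfolding gamma_index_def by (rule if_not_P[OF False])
  have "ereal (1/\<alpha>) < gamma_index \<sigma> \<longleftrightarrow> (\<exists>\<gamma>\<in>{\<gamma>. \<gamma> > 0 \<and> P_prop \<sigma> \<gamma>}. ereal (1/\<alpha>) < ereal \<gamma>)"
    unfolding eq less_SUP_iff by (rule refl)
  note iff = this
  have ap: "1/\<alpha> > 0" using alpha_pos by simp
  show ?thesis
  proof
    assume "ereal (1/\<alpha>) < gamma_index \<sigma>"
    then obtain \<gamma> where "\<gamma>>0" "P_prop \<sigma> \<gamma>" "ereal (1/\<alpha>) < ereal \<gamma>" using iff by blast
    thus "\<exists>\<gamma>>1/\<alpha>. P_prop \<sigma> \<gamma>" by auto
  next
    assume "\<exists>\<gamma>>1/\<alpha>. P_prop \<sigma> \<gamma>"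
    then obtain \<gamma> where g: "\<gamma> > 1/\<alpha>" "P_prop \<sigma> \<gamma>" by blast
    moreover from g have "\<gamma> > 0" using ap by linarith
    ultimately show "ereal (1/\<alpha>) < gamma_index \<sigma>" using iff by auto
  qed
qed

lemma P_prop_EvIV:
  assumes "\<gamma> > 1/\<alpha>" "P_prop \<sigma> \<gamma>" shows "EvIV"
proof -
  obtain K where K: "K > 1" "Limsup at_top (\<lambda>t. ereal (\<sigma> (K powr \<gamma> * t) / \<sigma> t)) < ereal K"
    using assms(2) unfolding P_prop_def by blast
  have "1/\<alpha> > 0" using alpha_pos by simp
  hence gp: "\<gamma> > 0" using assms(1) by linarith
  define L where "L = K powr \<gamma>"
  have L: "L > 1" unfolding L_def using K gp by simp
  have "K = L powr (1/\<gamma>)" unfolding L_def using K gp by (simp add: powr_powr)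
  also have "\<dots> < L powr \<alpha>" using L assms(1) gp alpha_pos
    by (intro powr_less_mono) (auto simp: field_simps)
  finally have "ereal K < ereal (L powr \<alpha>)" by simp
  with K(2) have "Limsup at_top (\<lambda>t. ereal (\<sigma> (L * t) / \<sigma> t)) < ereal (L powr \<alpha>)"
    unfolding L_def by (rule order.strict_trans)
  hence "\<exists>K>1. Limsup at_top (\<lambda>t. ereal (\<sigma> (K * t) / \<sigma> t)) < ereal (K powr \<alpha>)" using L by blast
  thus ?thesis using cond_iv_EvIV by blast
qed

lemma Hub_P_prop:
  assumes Hub shows "\<exists>\<gamma>>1/\<alpha>. P_prop \<sigma> \<gamma>"
proof -
  obtain \<gamma> M where "hub \<gamma> M" using assms unfolding Hub_def by blast
  hence g: "0 < \<gamma>" "\<gamma> < \<alpha>" "M > 0" and H: "\<forall>x\<ge>a. \<forall>l\<ge>1. \<sigma> (l*x) \<le> M * l powr \<gamma> * \<sigma> x"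
    unfolding hub_def by auto
  define \<gamma>1 where "\<gamma>1 = (\<gamma> + \<alpha>)/2"
  have g1: "\<gamma> < \<gamma>1" "\<gamma>1 < \<alpha>" "0 < \<gamma>1" unfolding \<gamma>1_def using g by auto
  obtain n :: nat where n: "n \<ge> 2" "M * real n powr \<gamma> < real n powr \<gamma>1"
    using choose_big_nat[OF g(1) g1(1) g(3), of 0] by auto
  define K where "K = real n powr \<gamma>1"
  have K: "K > 1" unfolding K_def using n g1 by simp
  have Kn: "K powr (1/\<gamma>1) = real n" unfolding K_def using g1 by (simp add: powr_powr)
  have "\<forall>\<^sub>F t in at_top. ereal (\<sigma> (real n * t) / \<sigma> t) \<le> ereal (M * real n powr \<gamma>)"
    using eventually_ge_at_top[of a]
  proof eventually_elim
    case (elim t)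
    then show ?case using H n posD[OF elim] by (auto simp: divide_le_eq)
  qed
  hence "Limsup at_top (\<lambda>t. ereal (\<sigma> (K powr (1/\<gamma>1) * t) / \<sigma> t)) \<le> ereal (M * real n powr \<gamma>)"
    unfolding Kn by (rule Limsup_bounded)
  also have "\<dots> < ereal K" using n unfolding K_def by simp
  finally have "P_prop \<sigma> (1/\<gamma>1)" unfolding P_prop_def using K by blast
  moreover have "1/\<gamma>1 > 1/\<alpha>" using g1 by (simp add: frac_less2)
  ultimately show ?thesis by blast
qed

lemma cond_v_Hub: "gamma_index \<sigma> > ereal (1 / \<alpha>) \<longleftrightarrow> Hub"
  using gamma_index_iff P_prop_EvIV EvIV_Hub Hub_P_prop by blast

lemma cond_vi_Hub: "upper_matuszewska \<sigma> < ereal \<alpha> \<longleftrightarrow> Hub"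
proof
  assume "upper_matuszewska \<sigma> < ereal \<alpha>"
  then obtain \<beta> where bS: "\<beta> \<in> {\<alpha>. \<exists>C\<alpha>>0. \<forall>\<Lambda>>1.
      Limsup at_top (\<lambda>x. SUP l\<in>{1..\<Lambda>}. ereal (\<sigma> (l * x) / (l powr \<alpha> * \<sigma> x)))
        \<le> ereal C\<alpha>}" and bl: "ereal \<beta> < ereal \<alpha>"
    unfolding upper_matuszewska_def Inf_less_iff by blast
  from bS obtain C where b2: "C > 0"
    and Hb: "\<forall>\<Lambda>>1. Limsup at_top (\<lambda>x. SUP l\<in>{1..\<Lambda>}. ereal (\<sigma> (l * x) / (l powr \<beta> * \<sigma> x))) \<le> ereal C"
    by blast
  have b: "\<beta> < \<alpha>" "C > 0" using bl b2 by auto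
  define \<beta>' where "\<beta>' = max \<beta> (\<alpha>/2)"
  have b': "0 < \<beta>'" "\<beta>' < \<alpha>" "\<beta> \<le> \<beta>'" unfolding \<beta>'_def using b alpha_pos by auto
  obtain n :: nat where n: "n \<ge> 2" "(2*C) * real n powr \<beta>' < real n powr \<alpha>"
    using choose_big_nat[OF b'(1,2), of "2*C" 0] b by auto
  have "Limsup at_top (\<lambda>x. SUP l\<in>{1..real n}. ereal (\<sigma> (l * x) / (l powr \<beta> * \<sigma> x))) \<le> ereal C"
    using Hb n by auto
  also have "\<dots> < ereal (2*C)" using b by simp
  finally have "\<forall>\<^sub>F x in at_top. (SUP l\<in>{1..real n}. ereal (\<sigma> (l * x) / (l powr \<beta> * \<sigma> x))) < ereal (2*C)"
    by (rule Limsup_lessD)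
  hence "\<forall>\<^sub>F x in at_top. \<sigma> (real n * x) \<le> (2*C * real n powr \<beta>') * \<sigma> x"
    using ev_pos
  proof eventually_elim
    case (elim x)
    have "ereal (\<sigma> (real n * x) / (real n powr \<beta> * \<sigma> x)) \<le> (SUP l\<in>{1..real n}. ereal (\<sigma> (l * x) / (l powr \<beta> * \<sigma> x)))"
      using n by (intro SUP_upper) auto
    from order.strict_trans1[OF this elim(1)] have "\<sigma> (real n * x) / (real n powr \<beta> * \<sigma> x) < 2*C" by simp
    moreover have "real n powr \<beta> * \<sigma> x > 0" using elim n by simp
    ultimately have "\<sigma> (real n * x) < 2*C * real n powr \<beta> * \<sigma> x" by (simp add: divide_less_eq algebra_simps)
    also have "\<dots> \<le> 2*C * real n powr \<beta>' * \<sigma> x"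
      using b b' n elim by (intro mult_right_mono mult_left_mono powr_mono) auto
    finally show ?case by simp
  qed
  hence EvIV unfolding EvIV_def using n by (intro exI[of _ "real n"]) auto
  thus Hub using EvIV_Hub by blast
next
  assume Hub
  then obtain \<gamma> M where "hub \<gamma> M" unfolding Hub_def by blast
  hence g: "0 < \<gamma>" "\<gamma> < \<alpha>" "M > 0" and H: "\<forall>x\<ge>a. \<forall>l\<ge>1. \<sigma> (l*x) \<le> M * l powr \<gamma> * \<sigma> x"
    unfolding hub_def by auto
  have "\<forall>\<Lambda>>1. Limsup at_top (\<lambda>x. SUP l\<in>{1..\<Lambda>}. ereal (\<sigma> (l * x) / (l powr \<gamma> * \<sigma> x))) \<le> ereal M"
  proof (intro allI impI)
    fix \<Lambda> :: real assume "\<Lambda> > 1"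
    show "Limsup at_top (\<lambda>x. SUP l\<in>{1..\<Lambda>}. ereal (\<sigma> (l * x) / (l powr \<gamma> * \<sigma> x))) \<le> ereal M"
    proof (rule Limsup_bounded)
      show "\<forall>\<^sub>F x in at_top. (SUP l\<in>{1..\<Lambda>}. ereal (\<sigma> (l * x) / (l powr \<gamma> * \<sigma> x))) \<le> ereal M"
        using eventually_ge_at_top[of a]
      proof eventually_elim
        case (elim x)
        show ?case
        proof (rule SUP_least)
          fix l assume "l \<in> {1..\<Lambda>}"
          hence l: "l \<ge> 1" by auto
          have "l powr \<gamma> * \<sigma> x > 0" using l posD[OF elim] by simp
          moreover have "\<sigma> (l*x) \<le> M * l powr \<gamma> * \<sigma> x" using H elim l by auto
          ultimately show "ereal (\<sigma> (l * x) / (l powr \<gamma> * \<sigma> x)) \<le> ereal M"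
            by (simp add: divide_le_eq algebra_simps)
        qed
      qed
    qed
  qed
  hence "ereal \<gamma> \<in> ereal ` {\<alpha>. \<exists>C\<alpha>>0. \<forall>\<Lambda>>1.
      Limsup at_top (\<lambda>x. SUP l\<in>{1..\<Lambda>}. ereal (\<sigma> (l * x) / (l powr \<alpha> * \<sigma> x)))
        \<le> ereal C\<alpha>}" using g by blast
  hence "upper_matuszewska \<sigma> \<le> ereal \<gamma>" unfolding upper_matuszewska_def by (rule Inf_lower)
  also have "\<dots> < ereal \<alpha>" using g by simp
  finally show "upper_matuszewska \<sigma> < ereal \<alpha>" .
qed

end

lemma mono_max0_meas:
  fixes g :: "real \<Rightarrow> real"
  assumes "mono_on {0..} g"
  shows "(\<lambda>x. g (max 0 x)) \<in> borel_measurable borel"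
proof (rule borel_measurable_mono)
  show "mono (\<lambda>x. g (max 0 x))"
    unfolding mono_def using assms by (auto intro!: mono_onD[OF assms])
qed

lemma nn_tail_pow:
  fixes \<beta> z :: real
  assumes b: "\<beta> > 0" and z: "z > 0"
  shows "(\<integral>\<^sup>+ t. ennreal (t powr (-1-\<beta>)) * indicator {z..} t \<partial>lborel) = ennreal (z powr (-\<beta>) / \<beta>)"
proof -
  have "(\<integral>\<^sup>+ t. ennreal (t powr (-1-\<beta>)) * indicator {z..} t \<partial>lborel) = ennreal (0 - (- (z powr (-\<beta>)) / \<beta>))"
  proof (rule nn_integral_FTC_atLeast)
    show "(\<lambda>t. t powr (-1-\<beta>)) \<in> borel_measurable borel" by measurable
    fix x assume x: "z \<le> x"
    hence xp: "x > 0" using z by simp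
    show "((\<lambda>x. - (x powr (-\<beta>)) / \<beta>) has_real_derivative x powr (-1-\<beta>)) (at x)"
      using xp b by (auto intro!: derivative_eq_intros simp: field_simps powr_diff powr_minus)
    show "0 \<le> x powr (-1-\<beta>)" by simp
  next
    have "((\<lambda>x::real. x powr (-\<beta>)) \<longlongrightarrow> 0) at_top"
      using b by (intro tendsto_neg_powr filterlim_ident) auto
    hence "((\<lambda>x::real. - (x powr (-\<beta>)) / \<beta>) \<longlongrightarrow> - 0 / \<beta>) at_top"
      by (intro tendsto_divide tendsto_minus) (use b in auto)
    thus "((\<lambda>x::real. - (x powr (-\<beta>)) / \<beta>) \<longlongrightarrow> 0) at_top" by simp
  qed
  thus ?thesis by simp
qed

context sig
begin

definition sig0 where "sig0 = (\<lambda>x. \<sigma> (max 0 x))"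

lemma sig0_meas[measurable]: "sig0 \<in> borel_measurable borel"
  unfolding sig0_def by (rule mono_max0_meas[OF mono])

lemma sig0_eq: "x \<ge> 0 \<Longrightarrow> sig0 x = \<sigma> x" unfolding sig0_def by simp

lemma int_eq_sig0:
  assumes "y \<ge> 0"
  shows "(\<integral>\<^sup>+ t\<in>{1..}. ennreal (\<sigma> (y * t) / t powr (1 + \<alpha>)) \<partial>lborel)
       = (\<integral>\<^sup>+ t. ennreal (sig0 (y * t) / t powr (1 + \<alpha>)) * indicator {1..} t \<partial>lborel)"
  using assms by (intro nn_integral_cong) (auto simp: indicator_def sig0_eq)

lemma Hub_cond_i:
  assumes Hub shows "integral_condition \<sigma> \<alpha>"
proof -
  obtain \<gamma> M where "hub \<gamma> M" using assms unfolding Hub_def by blast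
  hence g: "0 < \<gamma>" "\<gamma> < \<alpha>" "M > 0" and H: "\<forall>x\<ge>a. \<forall>l\<ge>1. \<sigma> (l*x) \<le> M * l powr \<gamma> * \<sigma> x"
    unfolding hub_def by auto
  have big: "(\<integral>\<^sup>+ t\<in>{1..}. ennreal (\<sigma> (y * t) / t powr (1 + \<alpha>)) \<partial>lborel) \<le> ennreal (M * \<sigma> y / (\<alpha> - \<gamma>))"
    if y: "y \<ge> a" for y
  proof -
    have sy: "\<sigma> y > 0" using posD[OF y] .
    have "(\<integral>\<^sup>+ t\<in>{1..}. ennreal (\<sigma> (y * t) / t powr (1 + \<alpha>)) \<partial>lborel)
       \<le> (\<integral>\<^sup>+ t. ennreal (M * \<sigma> y) * (ennreal (t powr (-1-(\<alpha>-\<gamma>))) * indicator {1..} t) \<partial>lborel)"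
    proof (rule nn_integral_mono)
      fix t :: real
      show "ennreal (\<sigma> (y * t) / t powr (1 + \<alpha>)) * indicator {1..} t
           \<le> ennreal (M * \<sigma> y) * (ennreal (t powr (-1-(\<alpha>-\<gamma>))) * indicator {1..} t)"
      proof (cases "t \<ge> 1")
        case True
        have "\<sigma> (y*t) = \<sigma> (t*y)" by (simp add: mult.commute)
        also have "\<dots> \<le> M * t powr \<gamma> * \<sigma> y" using H y True by auto
        finally have "\<sigma> (y * t) / t powr (1 + \<alpha>) \<le> M * t powr \<gamma> * \<sigma> y / t powr (1 + \<alpha>)"
          using True by (intro divide_right_mono) auto
        also have "\<dots> = M * \<sigma> y * t powr (-1-(\<alpha>-\<gamma>))"
        proof -
          have e: "-1-(\<alpha>-\<gamma>) = \<gamma> - (1+\<alpha>)" by simp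
          have "t powr (-1-(\<alpha>-\<gamma>)) = t powr \<gamma> / t powr (1+\<alpha>)" unfolding e by (rule powr_diff)
          thus ?thesis by simp
        qed
        finally have "ennreal (\<sigma> (y * t) / t powr (1 + \<alpha>)) \<le> ennreal (M * \<sigma> y) * ennreal (t powr (-1-(\<alpha>-\<gamma>)))"
          using g sy by (simp add: ennreal_mult[symmetric] del: ennreal_mult')
        thus ?thesis using True by (simp add: mult.assoc)
      qed simp
    qed
    also have "\<dots> = ennreal (M * \<sigma> y) * (\<integral>\<^sup>+ t. ennreal (t powr (-1-(\<alpha>-\<gamma>))) * indicator {1..} t \<partial>lborel)"
      by (rule nn_integral_cmult) measurable
    also have "\<dots> = ennreal (M * \<sigma> y) * ennreal (1 powr (-(\<alpha>-\<gamma>)) / (\<alpha>-\<gamma>))"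
      using g by (subst nn_tail_pow) auto
    also have "\<dots> = ennreal (M * \<sigma> y / (\<alpha> - \<gamma>))"
      using g sy by (simp add: ennreal_mult[symmetric] del: ennreal_mult')
    finally show ?thesis .
  qed
  define C where "C = M / (\<alpha> - \<gamma>) * (1 + \<sigma> a)"
  have sa: "\<sigma> a > 0" using posD by simp
  have C: "C > 0" unfolding C_def using g sa by simp
  have "\<forall>y>0. (\<integral>\<^sup>+ t\<in>{1..}. ennreal (\<sigma> (y * t) / t powr (1 + \<alpha>)) \<partial>lborel) \<le> ennreal (C * \<sigma> y + C)"
  proof (intro allI impI)
    fix y :: real assume y: "y > 0"
    show "(\<integral>\<^sup>+ t\<in>{1..}. ennreal (\<sigma> (y * t) / t powr (1 + \<alpha>)) \<partial>lborel) \<le> ennreal (C * \<sigma> y + C)"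
    proof (cases "y \<ge> a")
      case True
      have "M * \<sigma> y / (\<alpha> - \<gamma>) \<le> C * \<sigma> y + C"
      proof -
        have "M * \<sigma> y / (\<alpha> - \<gamma>) = (M / (\<alpha> - \<gamma>)) * \<sigma> y" by simp
        also have "\<dots> \<le> C * \<sigma> y" unfolding C_def using g sa posD[OF True]
          by (intro mult_right_mono) (auto simp: field_simps)
        finally show ?thesis using C by linarith
      qed
      with big[OF True] show ?thesis by (meson ennreal_leI order.trans)
    next
      case False
      have "(\<integral>\<^sup>+ t\<in>{1..}. ennreal (\<sigma> (y * t) / t powr (1 + \<alpha>)) \<partial>lborel)
          \<le> (\<integral>\<^sup>+ t\<in>{1..}. ennreal (\<sigma> (a * t) / t powr (1 + \<alpha>)) \<partial>lborel)"
      proof (rule nn_integral_mono)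
        fix t :: real
        show "ennreal (\<sigma> (y * t) / t powr (1 + \<alpha>)) * indicator {1..} t \<le> ennreal (\<sigma> (a * t) / t powr (1 + \<alpha>)) * indicator {1..} t"
        proof (cases "t \<ge> 1")
          case True
          have "\<sigma> (y*t) \<le> \<sigma> (a*t)" using False True y by (intro monoD') auto
          hence "\<sigma> (y * t) / t powr (1 + \<alpha>) \<le> \<sigma> (a * t) / t powr (1 + \<alpha>)"
            using True by (intro divide_right_mono) auto
          thus ?thesis using True by (simp add: ennreal_leI)
        qed simp
      qed
      also have "\<dots> \<le> ennreal (M * \<sigma> a / (\<alpha> - \<gamma>))" using big by simp
      also have "\<dots> \<le> ennreal (C * \<sigma> y + C)"
      proof (rule ennreal_leI)
        have "M * \<sigma> a / (\<alpha> - \<gamma>) \<le> C" unfolding C_def using g sa by (simp add: field_simps)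
        moreover have "C * \<sigma> y \<ge> 0" using C nonnegD y by simp
        ultimately show "M * \<sigma> a / (\<alpha> - \<gamma>) \<le> C * \<sigma> y + C" by linarith
      qed
      finally show ?thesis .
    qed
  qed
  thus ?thesis unfolding integral_condition_def using C by blast
qed

end

context sig
begin

definition Ii :: "real \<Rightarrow> ennreal" where
  "Ii y = (\<integral>\<^sup>+ t\<in>{1..}. ennreal (\<sigma> (y * t) / t powr (1 + \<alpha>)) \<partial>lborel)"

lemma Ii_sig0: "y \<ge> 0 \<Longrightarrow> Ii y = (\<integral>\<^sup>+ t. ennreal (sig0 (y * t) / t powr (1 + \<alpha>)) * indicator {1..} t \<partial>lborel)"
  unfolding Ii_def by (rule int_eq_sig0)

lemma Ii_mono:
  assumes "0 \<le> x" "x \<le> y" shows "Ii x \<le> Ii y"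
  unfolding Ii_def
proof (rule nn_integral_mono)
  fix t :: real
  show "ennreal (\<sigma> (x * t) / t powr (1 + \<alpha>)) * indicator {1..} t \<le> ennreal (\<sigma> (y * t) / t powr (1 + \<alpha>)) * indicator {1..} t"
  proof (cases "t \<ge> 1")
    case True
    have "\<sigma> (x*t) \<le> \<sigma> (y*t)" using assms True by (intro monoD') (auto intro: mult_right_mono)
    hence "\<sigma> (x * t) / t powr (1 + \<alpha>) \<le> \<sigma> (y * t) / t powr (1 + \<alpha>)"
      using True by (intro divide_right_mono) auto
    thus ?thesis using True by (simp add: ennreal_leI)
  qed simp
qed

lemma Ii_lower:
  assumes y: "y \<ge> 0" shows "ennreal (\<sigma> y / \<alpha>) \<le> Ii y"
proof -
  have "ennreal (\<sigma> y / \<alpha>) = ennreal (\<sigma> y) * ennreal (1 powr (-\<alpha>) / \<alpha>)"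
    using nonnegD[OF y] alpha_pos by (simp add: ennreal_mult[symmetric] del: ennreal_mult')
  also have "\<dots> = ennreal (\<sigma> y) * (\<integral>\<^sup>+ t. ennreal (t powr (-1-\<alpha>)) * indicator {1..} t \<partial>lborel)"
    using alpha_pos by (subst nn_tail_pow) auto
  also have "\<dots> = (\<integral>\<^sup>+ t. ennreal (\<sigma> y) * (ennreal (t powr (-1-\<alpha>)) * indicator {1..} t) \<partial>lborel)"
    by (rule nn_integral_cmult[symmetric]) measurable
  also have "\<dots> \<le> Ii y" unfolding Ii_def
  proof (rule nn_integral_mono)
    fix t :: real
    show "ennreal (\<sigma> y) * (ennreal (t powr (-1-\<alpha>)) * indicator {1..} t) \<le> ennreal (\<sigma> (y * t) / t powr (1 + \<alpha>)) * indicator {1..} t"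
    proof (cases "t \<ge> 1")
      case True
      have "\<sigma> y \<le> \<sigma> (y*t)" using y True by (intro monoD') (auto simp: mult_le_cancel_left1)
      hence "\<sigma> y * t powr (-1-\<alpha>) \<le> \<sigma> (y*t) * t powr (-1-\<alpha>)" by (intro mult_right_mono) auto
      moreover have "t powr (-1-\<alpha>) = 1 / t powr (1+\<alpha>)"
        using powr_minus_divide[of t "1+\<alpha>"] by (simp add: minus_add_distrib)
      ultimately have "ennreal (\<sigma> y * t powr (-1-\<alpha>)) \<le> ennreal (\<sigma> (y * t) / t powr (1 + \<alpha>))"
        by (intro ennreal_leI) simp
      thus ?thesis using True nonnegD[OF y] by (simp add: ennreal_mult[symmetric] del: ennreal_mult')
    qed simp
  qed
  finally show ?thesis .
qed

lemma Ii_split: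
  assumes y: "y \<ge> 0"
  shows "ennreal (\<sigma> y * 2 powr (-1-\<alpha>)) + ennreal (2 powr (-\<alpha>)) * Ii (2*y) \<le> Ii y"
proof -
  define f where "f = (\<lambda>t. ennreal (sig0 (y * t) / t powr (1 + \<alpha>)))"
  have fm[measurable]: "f \<in> borel_measurable borel" unfolding f_def by measurable
  have "Ii y = (\<integral>\<^sup>+ t. f t * indicator {1..<2} t + f t * indicator {2..} t \<partial>lborel)"
    unfolding Ii_sig0[OF y] f_def by (intro nn_integral_cong) (auto simp: indicator_def)
  also have "\<dots> = (\<integral>\<^sup>+ t. f t * indicator {1..<2} t \<partial>lborel) + (\<integral>\<^sup>+ t. f t * indicator {2..} t \<partial>lborel)"
    by (rule nn_integral_add) measurable
  finally have sp: "Ii y = (\<integral>\<^sup>+ t. f t * indicator {1..<2} t \<partial>lborel) + (\<integral>\<^sup>+ t. f t * indicator {2..} t \<partial>lborel)" .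
  have A: "ennreal (\<sigma> y * 2 powr (-1-\<alpha>)) \<le> (\<integral>\<^sup>+ t. f t * indicator {1..<2} t \<partial>lborel)"
  proof -
    have "ennreal (\<sigma> y * 2 powr (-1-\<alpha>)) = (\<integral>\<^sup>+ t. ennreal (\<sigma> y * 2 powr (-1-\<alpha>)) * indicator {1..<2::real} t \<partial>lborel)"
      by (subst nn_integral_cmult_indicator) auto
    also have "\<dots> \<le> (\<integral>\<^sup>+ t. f t * indicator {1..<2} t \<partial>lborel)"
    proof (rule nn_integral_mono)
      fix t :: real
      show "ennreal (\<sigma> y * 2 powr (-1-\<alpha>)) * indicator {1..<2} t \<le> f t * indicator {1..<2} t"
      proof (cases "t \<in> {1..<2}")
        case True
        hence t: "1 \<le> t" "t < 2" by auto
        have "\<sigma> y \<le> \<sigma> (y*t)" using y t by (intro monoD') (auto simp: mult_le_cancel_left1)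
        moreover have "t powr (1+\<alpha>) \<le> 2 powr (1+\<alpha>)" using t alpha_pos by (intro powr_mono2) auto
        moreover have "t powr (1+\<alpha>) > 0" using t by simp
        moreover have "\<sigma> y \<ge> 0" using nonnegD[OF y] .
        ultimately have "\<sigma> y / 2 powr (1+\<alpha>) \<le> \<sigma> (y*t) / t powr (1+\<alpha>)"
          by (meson frac_le less_eq_real_def order.trans)
        moreover have "\<sigma> y * 2 powr (-1-\<alpha>) = \<sigma> y / 2 powr (1+\<alpha>)"
          using powr_minus_divide[of "2::real" "1+\<alpha>"] by (simp add: minus_add_distrib)
        ultimately show ?thesis using True t y unfolding f_def by (simp add: sig0_eq ennreal_leI)
      qed simp
    qed
    finally show ?thesis .
  qed
  have B: "(\<integral>\<^sup>+ t. f t * indicator {2..} t \<partial>lborel) = ennreal (2 powr (-\<alpha>)) * Ii (2*y)"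
  proof -
    have "(\<integral>\<^sup>+ t. f t * indicator {2..} t \<partial>lborel) = \<bar>2::real\<bar> * (\<integral>\<^sup>+ s. f (0 + 2 * s) * indicator {2..} (0 + 2 * s) \<partial>lborel)"
      by (rule nn_integral_real_affine) auto
    also have "\<dots> = 2 * (\<integral>\<^sup>+ s. ennreal (2 powr (-1-\<alpha>)) * (ennreal (sig0 ((2*y) * s) / s powr (1 + \<alpha>)) * indicator {1..} s) \<partial>lborel)"
    proof -
      have "f (0 + 2 * s) * indicator {2..} (0 + 2 * s) =
          ennreal (2 powr (-1-\<alpha>)) * (ennreal (sig0 ((2*y) * s) / s powr (1 + \<alpha>)) * indicator {1..} s)" for s
      proof (cases "s \<ge> 1")
        case True
        have hA: "(2 * s) powr (1+\<alpha>) = 2 powr (1+\<alpha>) * s powr (1+\<alpha>)" using True by (simp add: powr_mult)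
        have e2: "(2::real) powr (-1-\<alpha>) = 1 / 2 powr (1+\<alpha>)"
          using powr_minus_divide[of "2::real" "1+\<alpha>"] by (simp add: minus_add_distrib)
        have yy: "y * (2 * s) = (2*y) * s" by simp
        have "sig0 (y * (2 * s)) / (2 * s) powr (1+\<alpha>) = sig0 ((2*y) * s) / (2 powr (1+\<alpha>) * s powr (1+\<alpha>))"
          by (simp only: hA yy)
        also have "\<dots> = (1 / 2 powr (1+\<alpha>)) * (sig0 ((2*y) * s) / s powr (1+\<alpha>))" by simp
        also have "\<dots> = 2 powr (-1-\<alpha>) * (sig0 ((2*y) * s) / s powr (1 + \<alpha>))" using e2 by simp
        finally have "sig0 (y * (2 * s)) / (2 * s) powr (1+\<alpha>) = 2 powr (-1-\<alpha>) * (sig0 ((2*y) * s) / s powr (1 + \<alpha>))" .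
        moreover have "sig0 ((2*y) * s) \<ge> 0" using True y by (simp add: sig0_eq nonnegD)
        ultimately show ?thesis using True unfolding f_def by (simp add: ennreal_mult[symmetric] del: ennreal_mult')
      qed (simp add: indicator_def)
      thus ?thesis by simp
    qed
    also have "\<dots> = 2 * (ennreal (2 powr (-1-\<alpha>)) * Ii (2*y))"
      using y by (subst nn_integral_cmult) (measurable, simp add: Ii_sig0)
    also have "\<dots> = ennreal (2 powr (-\<alpha>)) * Ii (2*y)"
    proof -
      have "(2::ennreal) * ennreal (2 powr (-1-\<alpha>)) = ennreal (2 * 2 powr (-1-\<alpha>))"
        by (simp add: ennreal_mult)
      also have "2 * 2 powr (-1-\<alpha>) = (2::real) powr (-\<alpha>)"
        by (simp add: powr_diff powr_minus_divide[symmetric] field_simps)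
      finally show ?thesis by (simp add: mult.assoc[symmetric])
    qed
    finally show ?thesis .
  qed
  show ?thesis using sp A B by (metis add_right_mono)
qed

lemma cond_i_EvIV:
  assumes "integral_condition \<sigma> \<alpha>" shows "EvIV"
proof -
  obtain C where C: "C > 0" and IC: "\<And>y. y > 0 \<Longrightarrow> Ii y \<le> ennreal (C * \<sigma> y + C)"
    using assms unfolding integral_condition_def Ii_def by blast
  define J where "J = (\<lambda>y. enn2real (Ii y))"
  have Jeq: "Ii y = ennreal (J y)" if "y > 0" for y
  proof -
    have "Ii y < top" using IC[OF that] by (simp add: order_le_less_trans)
    thus ?thesis unfolding J_def by simp
  qed
  have J0: "J y \<ge> 0" for y unfolding J_def by simp
  have JC: "J y \<le> C * \<sigma> y + C" if "y > 0" for y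
  proof -
    have "C * \<sigma> y + C \<ge> 0" using C nonnegD that by simp
    thus ?thesis using IC[OF that] Jeq[OF that] by (simp add: ennreal_le_iff)
  qed
  have Jlow: "\<sigma> y / \<alpha> \<le> J y" if "y > 0" for y
    using Ii_lower[of y] that Jeq[OF that] J0 by (simp add: ennreal_le_iff)
  have Jsplit: "\<sigma> y * 2 powr (-1-\<alpha>) + 2 powr (-\<alpha>) * J (2*y) \<le> J y" if "y > 0" for y
  proof -
    have "ennreal (\<sigma> y * 2 powr (-1-\<alpha>)) + ennreal (2 powr (-\<alpha>)) * ennreal (J (2*y)) \<le> ennreal (J y)"
      using Ii_split[of y] that Jeq[OF that] Jeq[of "2*y"] by simp
    moreover have "\<sigma> y * 2 powr (-1-\<alpha>) \<ge> 0" using nonnegD that by simp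
    ultimately show ?thesis using J0[of "2*y"] J0[of y]
      by (simp add: ennreal_mult[symmetric] ennreal_plus[symmetric] del: ennreal_mult' ennreal_plus)
  qed
  obtain T0 where T0: "\<And>y. y \<ge> T0 \<Longrightarrow> \<sigma> y \<ge> 1"
    using lim unfolding filterlim_at_top eventually_at_top_linorder by blast
  define T where "T = max (max T0 a) 1"
  have T: "T > 0" "T \<ge> a" unfolding T_def by auto
  define c1 where "c1 = 2 powr (-1-\<alpha>)"
  have c1: "c1 > 0" unfolding c1_def by simp
  define q where "q = max 0 (1 - c1 / (2*C))"
  have q: "0 \<le> q" "q < 1" unfolding q_def using c1 C by auto
  have step: "J (2*y) \<le> 2 powr \<alpha> * q * J y" if y: "y \<ge> T" for y
  proof -
    have yp: "y > 0" using T y by simp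
    have sy1: "\<sigma> y \<ge> 1" using T0[of y] y unfolding T_def by auto
    have "C \<le> C * \<sigma> y" using sy1 C by simp
    hence "J y \<le> 2 * C * \<sigma> y" using JC[OF yp] by linarith
    hence "c1 / (2*C) * J y \<le> c1 * \<sigma> y" using C c1 by (simp add: field_simps)
    hence "2 powr (-\<alpha>) * J (2*y) \<le> (1 - c1 / (2*C)) * J y"
      using Jsplit[OF yp] unfolding c1_def by (simp add: algebra_simps)
    also have "\<dots> \<le> q * J y" unfolding q_def using J0 by (intro mult_right_mono) auto
    finally have "2 powr \<alpha> * (2 powr (-\<alpha>) * J (2*y)) \<le> 2 powr \<alpha> * (q * J y)" by simp
    moreover have "2 powr \<alpha> * (2 powr (-\<alpha>) * J (2*y)) = J (2*y)"
      by (simp add: powr_minus field_simps)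
    ultimately show ?thesis by (simp add: mult.assoc)
  qed
  have iter: "J (2^n*y) \<le> (2 powr \<alpha> * q)^n * J y" if y: "y \<ge> T" for n y
  proof (induction n)
    case 0 then show ?case by simp
  next
    case (Suc n)
    have "(1::real) \<le> 2^n" by simp
    from mult_right_mono[OF this, of y] have "y \<le> 2^n*y" using y T by simp
    hence yn: "2^n*y \<ge> T" using y by linarith
    have "J (2^Suc n*y) = J (2*(2^n*y))" by (simp add: algebra_simps)
    also have "\<dots> \<le> 2 powr \<alpha> * q * J (2^n*y)" by (rule step[OF yn])
    also have "\<dots> \<le> 2 powr \<alpha> * q * ((2 powr \<alpha> * q)^n * J y)"
      using Suc q by (intro mult_left_mono) auto
    finally show ?case by (simp add: algebra_simps)
  qed
  obtain n0 where n0: "q^n0 < 1 / (2*C*\<alpha>)" using real_arch_pow_inv[of "1/(2*C*\<alpha>)" q] q C alpha_pos by auto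
  define n where "n = Suc n0"
  have qn: "q^n \<le> q^n0" unfolding n_def using q mult_left_le_one_le[of "q^n0" q] by simp
  define K :: real where "K = 2^n"
  have "(1::real) \<le> 2^n0" by simp
  hence K: "K > 1" unfolding K_def n_def power_Suc by linarith
  have KA: "K powr \<alpha> = (2 powr \<alpha>)^n" unfolding K_def
    by (simp add: powr_realpow[symmetric] powr_powr mult.commute)
  define \<rho> where "\<rho> = 2*C*\<alpha> * q^n * K powr \<alpha>"
  have rho: "\<rho> < K powr \<alpha>"
  proof -
    have "q^n < 1/(2*C*\<alpha>)" using n0 qn by linarith
    hence "(2*C*\<alpha>) * q^n < (2*C*\<alpha>) * (1/(2*C*\<alpha>))"
      by (intro mult_strict_left_mono) (use C alpha_pos in auto)
    hence "2*C*\<alpha> * q^n < 1" using C alpha_pos by simp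
    thus ?thesis unfolding \<rho>_def using K by simp
  qed
  have "\<forall>\<^sub>F y in at_top. \<sigma> (K*y) \<le> \<rho> * \<sigma> y"
    using eventually_ge_at_top[of T]
  proof eventually_elim
    case (elim y)
    have yp: "y > 0" using T elim by simp
    have sy1: "\<sigma> y \<ge> 1" using T0[of y] elim unfolding T_def by auto
    have Ky: "K*y > 0" using K yp by simp
    have "\<sigma> (K*y) / \<alpha> \<le> J (K*y)" by (rule Jlow[OF Ky])
    also have "\<dots> \<le> (2 powr \<alpha> * q)^n * J y" unfolding K_def by (rule iter[OF elim])
    also have "\<dots> \<le> (2 powr \<alpha> * q)^n * (2*C*\<sigma> y)"
    proof (rule mult_left_mono)
      have "C \<le> C * \<sigma> y" using sy1 C by simp
      thus "J y \<le> 2*C*\<sigma> y" using JC[OF yp] by linarith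
      show "0 \<le> (2 powr \<alpha> * q)^n" using q by simp
    qed
    finally have "\<sigma> (K*y) \<le> \<alpha> * ((2 powr \<alpha> * q)^n * (2*C*\<sigma> y))"
      using alpha_pos by (simp add: divide_le_eq mult.commute)
    also have "\<dots> = \<rho> * \<sigma> y" unfolding \<rho>_def KA by (simp add: power_mult_distrib algebra_simps)
    finally show ?case .
  qed
  thus ?thesis unfolding EvIV_def using K rho by blast
qed

lemma cond_i_Hub: "integral_condition \<sigma> \<alpha> \<longleftrightarrow> Hub"
  using cond_i_EvIV EvIV_Hub Hub_cond_i by blast

end

lemma nn_lin2:
  assumes [measurable]: "F \<in> borel_measurable M" "G \<in> borel_measurable M"
  shows "(\<integral>\<^sup>+ t. c * F t + d * G t \<partial>M) = c * integral\<^sup>N M F + d * integral\<^sup>N M G"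
proof -
  have [measurable]: "(\<lambda>t. c * F t) \<in> borel_measurable M" "(\<lambda>t. d * G t) \<in> borel_measurable M" by measurable
  have "(\<integral>\<^sup>+ t. c * F t + d * G t \<partial>M) = (\<integral>\<^sup>+ t. c * F t \<partial>M) + (\<integral>\<^sup>+ t. d * G t \<partial>M)"
    by (rule nn_integral_add) measurable
  also have "\<dots> = c * integral\<^sup>N M F + d * integral\<^sup>N M G"
    by (simp add: nn_integral_cmult)
  finally show ?thesis .
qed

lemma tail1: "\<alpha> > 0 \<Longrightarrow> (\<integral>\<^sup>+ t. ennreal (t powr (-1-\<alpha>)) * indicator {1..} t \<partial>lborel) = ennreal (1/\<alpha>)"
  using nn_tail_pow[of \<alpha> 1] by simp

lemma powr_neg1: "t > 0 \<Longrightarrow> (t::real) powr (-1-\<alpha>) = 1 / t powr (1+\<alpha>)"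
  using powr_minus_divide[of t "1+\<alpha>"] by (simp add: minus_add_distrib)

context sig
begin

lemma cond_ii_i:
  assumes km: "mono_on {0..} \<kappa>" and kn: "\<forall>t\<ge>0. \<kappa> t \<ge> 0" and ks: "sim_on {0..} \<sigma> \<kappa>"
    and ki: "integral_condition \<kappa> \<alpha>"
  shows "integral_condition \<sigma> \<alpha>"
proof -
  obtain C0 where C0: "C0 \<ge> 1" and s1: "\<forall>t\<in>{0..}. \<kappa> t / C0 - C0 \<le> \<sigma> t \<and> \<sigma> t \<le> C0 * \<kappa> t + C0"
    using ks unfolding sim_on_def by blast
  obtain C' where C': "C' > 0" and ic: "\<And>y. y > 0 \<Longrightarrow> (\<integral>\<^sup>+ t\<in>{1..}. ennreal (\<kappa> (y * t) / t powr (1 + \<alpha>)) \<partial>lborel) \<le> ennreal (C' * \<kappa> y + C')"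
    using ki unfolding integral_condition_def by blast
  define \<kappa>0 where "\<kappa>0 = (\<lambda>x. \<kappa> (max 0 x))"
  have [measurable]: "\<kappa>0 \<in> borel_measurable borel" unfolding \<kappa>0_def by (rule mono_max0_meas[OF km])
  define D where "D = C0*C'*C0 + C0*C'*C0^2 + C0*C' + C0/\<alpha>"
  have D: "D > 0" unfolding D_def using C0 C' alpha_pos by (intro add_pos_pos) auto
  show ?thesis unfolding integral_condition_def
  proof (intro exI[of _ D] conjI allI impI)
    show "D > 0" by (rule D)
    fix y :: real assume y: "y > 0"
    have "(\<integral>\<^sup>+ t\<in>{1..}. ennreal (\<sigma> (y*t) / t powr (1+\<alpha>)) \<partial>lborel)
       \<le> (\<integral>\<^sup>+ t. ennreal C0 * (ennreal (\<kappa>0 (y*t) / t powr (1+\<alpha>)) * indicator {1..} t)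
              + ennreal C0 * (ennreal (t powr (-1-\<alpha>)) * indicator {1..} t) \<partial>lborel)"
    proof (rule nn_integral_mono)
      fix t :: real
      show "ennreal (\<sigma> (y*t) / t powr (1+\<alpha>)) * indicator {1..} t
         \<le> ennreal C0 * (ennreal (\<kappa>0 (y*t) / t powr (1+\<alpha>)) * indicator {1..} t)
              + ennreal C0 * (ennreal (t powr (-1-\<alpha>)) * indicator {1..} t)"
      proof (cases "t \<ge> 1")
        case True
        have yt: "y*t \<ge> 0" using y True by simp
        have k0: "\<kappa>0 (y*t) = \<kappa> (y*t)" unfolding \<kappa>0_def using yt by simp
        have tp: "t powr (1+\<alpha>) > 0" using True by simp
        have "\<sigma> (y*t) \<le> C0 * \<kappa> (y*t) + C0" using s1 yt by auto
        hence "\<sigma> (y*t) / t powr (1+\<alpha>) \<le> (C0 * \<kappa> (y*t) + C0) / t powr (1+\<alpha>)"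
          using tp by (intro divide_right_mono) auto
        also have "\<dots> = C0 * (\<kappa> (y*t) / t powr (1+\<alpha>)) + C0 * t powr (-1-\<alpha>)"
          using powr_neg1[of t \<alpha>] True by (simp add: add_divide_distrib)
        finally have "ennreal (\<sigma> (y*t) / t powr (1+\<alpha>)) \<le> ennreal (C0 * (\<kappa> (y*t) / t powr (1+\<alpha>)) + C0 * t powr (-1-\<alpha>))"
          by (rule ennreal_leI)
        also have "\<dots> = ennreal C0 * ennreal (\<kappa> (y*t) / t powr (1+\<alpha>)) + ennreal C0 * ennreal (t powr (-1-\<alpha>))"
          using C0 kn yt tp by (simp add: ennreal_plus[symmetric] ennreal_mult[symmetric] del: ennreal_plus ennreal_mult')
        finally show ?thesis using True k0 by simp
      qed simp
    qed
    also have "\<dots> = ennreal C0 * (\<integral>\<^sup>+ t. ennreal (\<kappa>0 (y*t) / t powr (1+\<alpha>)) * indicator {1..} t \<partial>lborel)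
        + ennreal C0 * ennreal (1/\<alpha>)"
      by (subst nn_lin2) (measurable, simp add: tail1 alpha_pos)
    also have "(\<integral>\<^sup>+ t. ennreal (\<kappa>0 (y*t) / t powr (1+\<alpha>)) * indicator {1..} t \<partial>lborel)
        = (\<integral>\<^sup>+ t\<in>{1..}. ennreal (\<kappa> (y * t) / t powr (1 + \<alpha>)) \<partial>lborel)"
      using y by (intro nn_integral_cong) (auto simp: indicator_def \<kappa>0_def)
    also have "ennreal C0 * (\<integral>\<^sup>+ t\<in>{1..}. ennreal (\<kappa> (y * t) / t powr (1 + \<alpha>)) \<partial>lborel) + ennreal C0 * ennreal (1/\<alpha>)
        \<le> ennreal C0 * ennreal (C' * \<kappa> y + C') + ennreal C0 * ennreal (1/\<alpha>)"
      using ic[OF y] by (intro add_right_mono mult_left_mono) auto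
    also have "\<dots> = ennreal (C0 * (C' * \<kappa> y + C') + C0 / \<alpha>)"
      using C0 C' kn y alpha_pos by (simp add: ennreal_plus[symmetric] ennreal_mult[symmetric] del: ennreal_plus ennreal_mult')
    also have "\<dots> \<le> ennreal (D * \<sigma> y + D)"
    proof (rule ennreal_leI)
      have "\<kappa> y / C0 - C0 \<le> \<sigma> y" using s1 y by auto
      hence ky: "\<kappa> y \<le> C0 * \<sigma> y + C0^2" using C0 by (simp add: field_simps power2_eq_square)
      have "C0 * (C' * \<kappa> y + C') + C0 / \<alpha> \<le> C0 * (C' * (C0 * \<sigma> y + C0^2) + C') + C0 / \<alpha>"
        using ky C0 C' by (intro add_right_mono mult_left_mono) auto
      also have "\<dots> = (C0*C'*C0) * \<sigma> y + (C0*C'*C0^2 + C0*C' + C0/\<alpha>)" by (simp add: algebra_simps)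
      also have "\<dots> \<le> D * \<sigma> y + D"
      proof (rule add_mono)
        show "(C0*C'*C0) * \<sigma> y \<le> D * \<sigma> y"
          unfolding D_def using C0 C' alpha_pos nonnegD[of y] y by (intro mult_right_mono) auto
        show "C0*C'*C0^2 + C0*C' + C0/\<alpha> \<le> D"
          unfolding D_def using C0 C' by simp
      qed
      finally show "C0 * (C' * \<kappa> y + C') + C0 / \<alpha> \<le> D * \<sigma> y + D" .
    qed
    finally show "(\<integral>\<^sup>+ t\<in>{1..}. ennreal (\<sigma> (y * t) / t powr (1 + \<alpha>)) \<partial>lborel) \<le> ennreal (D * \<sigma> y + D)" .
  qed
qed

end

lemma nn_split_at:
  fixes h :: "real \<Rightarrow> ennreal"
  assumes [measurable]: "h \<in> borel_measurable borel" and yx: "y \<le> x"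
  shows "(\<integral>\<^sup>+ s. h s * indicator {y..} s \<partial>lborel) =
    (\<integral>\<^sup>+ s. h s * indicator {y..<x} s \<partial>lborel) + (\<integral>\<^sup>+ s. h s * indicator {x..} s \<partial>lborel)"
proof -
  have "(\<integral>\<^sup>+ s. h s * indicator {y..} s \<partial>lborel) = (\<integral>\<^sup>+ s. h s * indicator {y..<x} s + h s * indicator {x..} s \<partial>lborel)"
    using yx by (intro nn_integral_cong) (auto simp: indicator_def)
  also have "\<dots> = (\<integral>\<^sup>+ s. h s * indicator {y..<x} s \<partial>lborel) + (\<integral>\<^sup>+ s. h s * indicator {x..} s \<partial>lborel)"
    by (rule nn_integral_add) measurable
  finally show ?thesis .
qed

context sig
begin

definition Psi :: "real \<Rightarrow> ennreal" where
  "Psi y = (\<integral>\<^sup>+ s. ennreal (sig0 s / s powr (1+\<alpha>)) * indicator {y..} s \<partial>lborel)"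

definition Jr :: "real \<Rightarrow> real" where "Jr y = enn2real (Ii y)"

lemma Psi_Ii:
  assumes y: "y > 0" shows "Psi y = ennreal (y powr (-\<alpha>)) * Ii y"
proof -
  define g where "g = (\<lambda>s. ennreal (sig0 s / s powr (1+\<alpha>)) * indicator {y..} s)"
  have [measurable]: "g \<in> borel_measurable borel" unfolding g_def by measurable
  have "Psi y = \<bar>y\<bar> * (\<integral>\<^sup>+ u. g (0 + y * u) \<partial>lborel)"
    unfolding Psi_def g_def[symmetric] by (rule nn_integral_real_affine) (use y in auto)
  also have "\<dots> = ennreal y * (\<integral>\<^sup>+ u. g (y * u) \<partial>lborel)" using y by simp
  also have "\<dots> = (\<integral>\<^sup>+ u. ennreal y * g (y * u) \<partial>lborel)"
  proof (rule nn_integral_cmult[symmetric])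
    show "(\<lambda>u. g (y * u)) \<in> borel_measurable lborel" unfolding g_def by measurable
  qed
  also have "\<dots> = (\<integral>\<^sup>+ u. ennreal (y powr (-\<alpha>)) * (ennreal (sig0 (y * u) / u powr (1 + \<alpha>)) * indicator {1..} u) \<partial>lborel)"
  proof (intro nn_integral_cong)
    fix u :: real
    show "ennreal y * g (y * u) = ennreal (y powr (-\<alpha>)) * (ennreal (sig0 (y * u) / u powr (1 + \<alpha>)) * indicator {1..} u)"
    proof (cases "u \<ge> 1")
      case True
      have yu: "y*u \<ge> y" using y True by simp
      have s0: "sig0 (y*u) \<ge> 0" using y True by (simp add: sig0_eq nonnegD)
      have "y * (sig0 (y*u) / (y*u) powr (1+\<alpha>)) = y powr (-\<alpha>) * (sig0 (y * u) / u powr (1 + \<alpha>))"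
      proof -
        have h0: "(y*u) powr (1+\<alpha>) = y powr (1+\<alpha>) * u powr (1+\<alpha>)" using y True by (simp add: powr_mult)
        have h0': "y powr (1+\<alpha>) = y * y powr \<alpha>" using y by (simp add: powr_add)
        have h1: "(y*u) powr (1+\<alpha>) = y * (y powr \<alpha> * u powr (1+\<alpha>))" by (simp only: h0 h0' mult.assoc)
        have h2: "y powr (-\<alpha>) = 1 / y powr \<alpha>" by (simp add: powr_minus_divide)
        have pos: "y powr \<alpha> > 0" "u powr (1+\<alpha>) > 0" using y True by auto
        have "y * (sig0 (y*u) / (y*u) powr (1+\<alpha>)) = y * (sig0 (y*u) / (y * (y powr \<alpha> * u powr (1+\<alpha>))))"
          by (simp only: h1)
        also have "\<dots> = (1 / y powr \<alpha>) * (sig0 (y*u) / u powr (1+\<alpha>))" using y pos by (simp add: field_simps)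
        also have "\<dots> = y powr (-\<alpha>) * (sig0 (y*u) / u powr (1+\<alpha>))" by (simp only: h2)
        finally show ?thesis .
      qed
      thus ?thesis unfolding g_def using True yu y s0
        by (simp add: ennreal_mult[symmetric] del: ennreal_mult')
    next
      case False
      hence "y*u < y" using y by simp
      thus ?thesis using False unfolding g_def by simp
    qed
  qed
  also have "\<dots> = ennreal (y powr (-\<alpha>)) * Ii y"
    using y by (subst nn_integral_cmult) (measurable, simp add: Ii_sig0)
  finally show ?thesis .
qed

lemma Psi_split:
  assumes y: "0 < y" and yx: "y \<le> x"
  shows "\<exists>A B. Psi y = A + Psi x \<and> ennreal (\<sigma> y) * B \<le> A \<and> A \<le> ennreal (\<sigma> x) * B
     \<and> ennreal (y powr (-\<alpha>) / \<alpha>) = B + ennreal (x powr (-\<alpha>) / \<alpha>)"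
proof -
  define A where "A = (\<integral>\<^sup>+ s. ennreal (sig0 s / s powr (1+\<alpha>)) * indicator {y..<x} s \<partial>lborel)"
  define B where "B = (\<integral>\<^sup>+ s. ennreal (s powr (-1-\<alpha>)) * indicator {y..<x} s \<partial>lborel)"
  have 1: "Psi y = A + Psi x" unfolding Psi_def A_def by (rule nn_split_at) (measurable, rule yx)
  have "ennreal (y powr (-\<alpha>) / \<alpha>) = (\<integral>\<^sup>+ s. ennreal (s powr (-1-\<alpha>)) * indicator {y..} s \<partial>lborel)"
    using nn_tail_pow[of \<alpha> y] y alpha_pos by simp
  also have "\<dots> = B + (\<integral>\<^sup>+ s. ennreal (s powr (-1-\<alpha>)) * indicator {x..} s \<partial>lborel)"
    unfolding B_def by (rule nn_split_at) (measurable, rule yx)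
  also have "(\<integral>\<^sup>+ s. ennreal (s powr (-1-\<alpha>)) * indicator {x..} s \<partial>lborel) = ennreal (x powr (-\<alpha>) / \<alpha>)"
    using nn_tail_pow[of \<alpha> x] y yx alpha_pos by simp
  finally have 2: "ennreal (y powr (-\<alpha>) / \<alpha>) = B + ennreal (x powr (-\<alpha>) / \<alpha>)" .
  have 3: "ennreal (\<sigma> y) * B \<le> A"
    unfolding B_def A_def
  proof (subst nn_integral_cmult[symmetric], measurable, rule nn_integral_mono)
    fix s :: real
    show "ennreal (\<sigma> y) * (ennreal (s powr (-1-\<alpha>)) * indicator {y..<x} s) \<le> ennreal (sig0 s / s powr (1+\<alpha>)) * indicator {y..<x} s"
    proof (cases "s \<in> {y..<x}")
      case True
      hence s: "y \<le> s" "s < x" by auto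
      have sp: "s > 0" using s y by simp
      have "\<sigma> y \<le> sig0 s" using s y by (simp add: sig0_eq monoD')
      hence "\<sigma> y * s powr (-1-\<alpha>) \<le> sig0 s * s powr (-1-\<alpha>)" by (intro mult_right_mono) auto
      hence "ennreal (\<sigma> y * s powr (-1-\<alpha>)) \<le> ennreal (sig0 s / s powr (1+\<alpha>))"
        using powr_neg1[OF sp, of \<alpha>] by (intro ennreal_leI) simp
      thus ?thesis using True nonnegD[of y] y by (simp add: ennreal_mult[symmetric] del: ennreal_mult')
    qed simp
  qed
  have 4: "A \<le> ennreal (\<sigma> x) * B"
    unfolding B_def A_def
  proof (subst nn_integral_cmult[symmetric], measurable, rule nn_integral_mono)
    fix s :: real
    show "ennreal (sig0 s / s powr (1+\<alpha>)) * indicator {y..<x} s \<le> ennreal (\<sigma> x) * (ennreal (s powr (-1-\<alpha>)) * indicator {y..<x} s)"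
    proof (cases "s \<in> {y..<x}")
      case True
      hence s: "y \<le> s" "s < x" by auto
      have sp: "s > 0" using s y by simp
      have "sig0 s \<le> \<sigma> x" using s y by (simp add: sig0_eq monoD')
      hence "sig0 s * s powr (-1-\<alpha>) \<le> \<sigma> x * s powr (-1-\<alpha>)" by (intro mult_right_mono) auto
      hence "ennreal (sig0 s / s powr (1+\<alpha>)) \<le> ennreal (\<sigma> x * s powr (-1-\<alpha>))"
        using powr_neg1[OF sp, of \<alpha>] by (intro ennreal_leI) simp
      thus ?thesis using True nonnegD[of x] y yx by (simp add: ennreal_mult[symmetric] del: ennreal_mult')
    qed simp
  qed
  show ?thesis using 1 2 3 4 by blast
qed

context
  assumes icond: "integral_condition \<sigma> \<alpha>"
begin

lemma IiC: "\<exists>C>0. \<forall>y>0. Ii y \<le> ennreal (C * \<sigma> y + C)"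
  using icond unfolding integral_condition_def Ii_def by blast

lemma Ii_fin: assumes "y > 0" shows "Ii y = ennreal (Jr y)"
proof -
  obtain C where C: "C > 0" "\<forall>y>0. Ii y \<le> ennreal (C * \<sigma> y + C)" using IiC by blast
  have "Ii y < top" using C(2) assms by (metis ennreal_less_top order_le_less_trans)
  thus ?thesis unfolding Jr_def by simp
qed

lemma Jr_nonneg: "Jr y \<ge> 0" unfolding Jr_def by simp

lemma Jr_low: assumes "y > 0" shows "\<sigma> y / \<alpha> \<le> Jr y"
  using Ii_lower[of y] assms Ii_fin[OF assms] Jr_nonneg by (simp add: ennreal_le_iff)

lemma Jr_mono: assumes "0 < x" "x \<le> y" shows "Jr x \<le> Jr y"
  using Ii_mono[of x y] assms Ii_fin[of x] Ii_fin[of y] Jr_nonneg by (simp add: ennreal_le_iff)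

lemma Psi_real: assumes "y > 0" shows "Psi y = ennreal (y powr (-\<alpha>) * Jr y)"
  using Psi_Ii[OF assms] Ii_fin[OF assms] Jr_nonneg by (simp add: ennreal_mult)

lemma split_real:
  assumes y: "0 < y" and yx: "y \<le> x"
  shows "\<exists>A. y powr (-\<alpha>) * Jr y = A + x powr (-\<alpha>) * Jr x \<and>
      \<sigma> y * ((y powr (-\<alpha>) - x powr (-\<alpha>)) / \<alpha>) \<le> A \<and> A \<le> \<sigma> x * ((y powr (-\<alpha>) - x powr (-\<alpha>)) / \<alpha>)"
proof -
  have xp: "x > 0" using y yx by simp
  obtain A B where AB: "Psi y = A + Psi x" "ennreal (\<sigma> y) * B \<le> A" "A \<le> ennreal (\<sigma> x) * B"
     "ennreal (y powr (-\<alpha>) / \<alpha>) = B + ennreal (x powr (-\<alpha>) / \<alpha>)"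
    using Psi_split[OF y yx] by blast
  have Bfin: "B < top" using AB(4) by (metis ennreal_less_top le_iff_add order_le_less_trans)
  define b where "b = enn2real B"
  have Bb: "B = ennreal b" "b \<ge> 0" using Bfin unfolding b_def by auto
  have beq: "b = (y powr (-\<alpha>) - x powr (-\<alpha>)) / \<alpha>"
  proof -
    have "ennreal (y powr (-\<alpha>) / \<alpha>) = ennreal (b + x powr (-\<alpha>) / \<alpha>)"
      using AB(4) Bb alpha_pos by (simp add: ennreal_plus)
    hence "y powr (-\<alpha>) / \<alpha> = b + x powr (-\<alpha>) / \<alpha>"
      using Bb alpha_pos by (subst (asm) ennreal_inj) auto
    thus ?thesis by (simp add: diff_divide_distrib)
  qed
  have Afin: "A < top" using AB(1) Psi_real[OF y] by (metis ennreal_less_top le_iff_add order_le_less_trans)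
  define r where "r = enn2real A"
  have Ar: "A = ennreal r" "r \<ge> 0" using Afin unfolding r_def by auto
  have e1: "y powr (-\<alpha>) * Jr y = r + x powr (-\<alpha>) * Jr x"
  proof -
    have "ennreal (y powr (-\<alpha>) * Jr y) = ennreal (r + x powr (-\<alpha>) * Jr x)"
      using AB(1) Psi_real[OF y] Psi_real[OF xp] Ar Jr_nonneg by (simp add: ennreal_plus)
    thus ?thesis using Ar Jr_nonneg by (subst (asm) ennreal_inj) auto
  qed
  have e2: "\<sigma> y * b \<le> r" using AB(2) Ar Bb nonnegD[of y] y by (simp add: ennreal_mult[symmetric] ennreal_le_iff del: ennreal_mult')
  have e3: "r \<le> \<sigma> x * b" using AB(3) Ar Bb nonnegD[of x] xp by (simp add: ennreal_mult[symmetric] ennreal_le_iff del: ennreal_mult')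
  show ?thesis using e1 e2 e3 beq by blast
qed

lemma tangent:
  assumes x: "x > 0" and y: "y > 0"
  shows "Jr y \<le> (y/x) powr \<alpha> * Jr x + \<sigma> x / \<alpha> * (1 - (y/x) powr \<alpha>)"
proof -
  define p where "p = y powr \<alpha>"
  define q where "q = x powr \<alpha>"
  have pq: "p > 0" "q > 0" unfolding p_def q_def using x y by auto
  have yp: "y powr (-\<alpha>) = 1/p" unfolding p_def by (simp add: powr_minus_divide)
  have xq: "x powr (-\<alpha>) = 1/q" unfolding q_def by (simp add: powr_minus_divide)
  have yx: "(y/x) powr \<alpha> = p/q" unfolding p_def q_def using x y by (simp add: powr_divide)
  show ?thesis
  proof (cases "y \<le> x")
    case True
    obtain A where A: "1/p * Jr y = A + 1/q * Jr x" "A \<le> \<sigma> x * ((1/p - 1/q) / \<alpha>)"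
      using split_real[OF y True] yp xq by auto
    have "Jr y = p * A + (p/q) * Jr x" using A(1) pq by (simp add: field_simps)
    also have "p * A \<le> p * (\<sigma> x * ((1/p - 1/q) / \<alpha>))" using A(2) pq by (intro mult_left_mono) auto
    also have "p * (\<sigma> x * ((1/p - 1/q) / \<alpha>)) = \<sigma> x / \<alpha> * (p * (1/p - 1/q))" by simp
    also have "p * (1/p - 1/q) = 1 - p/q" using pq by (simp add: field_simps)
    finally show ?thesis unfolding yx by simp
  next
    case False
    hence xy: "x \<le> y" by simp
    obtain A where A: "1/q * Jr x = A + 1/p * Jr y" "\<sigma> x * ((1/q - 1/p) / \<alpha>) \<le> A"
      using split_real[OF x xy] yp xq by auto
    have "Jr y = (p/q) * Jr x - p * A" using A(1) pq by (simp add: field_simps)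
    also have "p * (\<sigma> x * ((1/q - 1/p) / \<alpha>)) \<le> p * A" using A(2) pq by (intro mult_left_mono) auto
    hence "(p/q) * Jr x - p * A \<le> (p/q) * Jr x - p * (\<sigma> x * ((1/q - 1/p) / \<alpha>))" by simp
    also have "p * (\<sigma> x * ((1/q - 1/p) / \<alpha>)) = \<sigma> x / \<alpha> * (p * (1/q - 1/p))" by simp
    also have "p * (1/q - 1/p) = - (1 - p/q)" using pq by (simp add: field_simps)
    finally show ?thesis unfolding yx by linarith
  qed
qed

end

end

lemma aff_comb:
  fixes t a b G c :: real
  shows "(1-t)*(a*G + c*(1-a)) + t*(b*G + c*(1-b)) = G*((1-t)*a + t*b) + c*(1 - ((1-t)*a + t*b))"
  by (simp add: algebra_simps)

context sig
begin

definition kap where "kap y = (if y \<le> 0 then \<sigma> 0 / \<alpha>^2 else Jr y / \<alpha>)"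

lemma cond_i_ii:
  assumes icond: "integral_condition \<sigma> \<alpha>"
  shows "\<exists>\<kappa> :: real \<Rightarrow> real. mono_on {0..} \<kappa> \<and> (\<forall>t\<ge>0. \<kappa> t \<ge> 0) \<and>
         sim_on {0..} \<sigma> \<kappa> \<and> \<kappa> 0 = \<sigma> 0 / \<alpha>\<^sup>2 \<and> integral_condition \<kappa> \<alpha> \<and>
         concave_on {0..} (\<lambda>t. \<kappa> (t powr (1 / \<alpha>)))"
proof -
  note Jl = Jr_low[OF icond] and Jm = Jr_mono[OF icond] and Jt = tangent[OF icond]
  note Jn = Jr_nonneg[OF icond]
  obtain C where C: "C > 0" and IC: "\<And>y. y > 0 \<Longrightarrow> Ii y \<le> ennreal (C * \<sigma> y + C)"
    using IiC[OF icond] by blast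
  have JC: "Jr y \<le> C * \<sigma> y + C" if "y > 0" for y
  proof -
    have "C * \<sigma> y + C \<ge> 0" using C nonnegD that by simp
    thus ?thesis using IC[OF that] Ii_fin[OF icond that] by (simp add: ennreal_le_iff)
  qed
  have ap: "\<alpha> > 0" "\<alpha>^2 > 0" using alpha_pos by auto
  have s0: "\<sigma> 0 \<ge> 0" using nonnegD by simp
  have kpos: "kap y = Jr y / \<alpha>" if "y > 0" for y unfolding kap_def using that by simp
  have k0: "kap 0 = \<sigma> 0 / \<alpha>^2" unfolding kap_def by simp
  have klow: "\<sigma> y \<le> \<alpha>^2 * kap y" if "y \<ge> 0" for y
  proof (cases "y = 0")
    case True thus ?thesis using k0 ap by simp
  next
    case False
    hence y: "y > 0" using that by simp
    have "\<sigma> y / \<alpha> \<le> Jr y" using Jl[OF y] .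
    thus ?thesis using kpos[OF y] ap by (simp add: field_simps power2_eq_square)
  qed
  have knn: "kap t \<ge> 0" for t unfolding kap_def using s0 Jn ap by auto
  have kmono: "mono_on {0..} kap"
  proof (rule mono_onI)
    fix x y :: real assume "x \<in> {0..}" "y \<in> {0..}" "x \<le> y"
    hence xy: "0 \<le> x" "x \<le> y" by auto
    show "kap x \<le> kap y"
    proof (cases "x = 0")
      case True
      show ?thesis
      proof (cases "y = 0")
        case False
        hence y: "y > 0" using xy by simp
        have "\<sigma> 0 \<le> \<sigma> y" using xy by (intro monoD') auto
        also have "\<dots> \<le> \<alpha>^2 * kap y" using klow xy by auto
        finally have "kap 0 * \<alpha>^2 \<le> kap y * \<alpha>^2" using k0 ap by (simp add: mult.commute)
        hence "kap 0 \<le> kap y" by (rule mult_right_le_imp_le) (use ap in auto)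
        thus ?thesis using True by simp
      qed (use True in simp)
    next
      case False
      hence "x > 0" "y > 0" using xy by auto
      thus ?thesis using Jm[of x y] xy kpos ap by (simp add: divide_right_mono)
    qed
  qed
  have ksim: "sim_on {0..} \<sigma> kap"
  proof -
    define C0 where "C0 = max (max 1 (\<alpha>^2)) (max (C/\<alpha>) (1/\<alpha>^2))"
    have C0: "C0 \<ge> 1" "C0 \<ge> \<alpha>^2" "C0 \<ge> C/\<alpha>" "C0 \<ge> 1/\<alpha>^2" unfolding C0_def by auto
    have up: "\<sigma> t \<le> C0 * kap t + C0" if t: "t \<ge> 0" for t
    proof -
      have "\<sigma> t \<le> \<alpha>^2 * kap t" using klow[OF t] .
      also have "\<dots> \<le> C0 * kap t" using C0 knn by (intro mult_right_mono) auto
      finally show ?thesis using C0 by linarith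
    qed
    have lo: "kap t / C0 - C0 \<le> \<sigma> t" if t: "t \<ge> 0" for t
    proof (cases "t = 0")
      case True
      have "kap t / C0 = \<sigma> 0 / (\<alpha>^2 * C0)" using True k0 by simp
      also have "\<dots> \<le> \<sigma> 0 / 1"
      proof (rule divide_left_mono)
        have "\<alpha>^2 * C0 \<ge> \<alpha>^2 * (1/\<alpha>^2)" using C0 ap by (intro mult_left_mono) auto
        thus "1 \<le> \<alpha>^2 * C0" using ap by simp
        show "0 \<le> \<sigma> 0" by (rule s0)
        show "0 < \<alpha>^2 * C0 * 1" using ap C0 by simp
      qed
      also have "\<dots> = \<sigma> 0" by simp
      finally show ?thesis using True C0 by simp
    next
      case False
      hence tp: "t > 0" using t by simp
      have "kap t \<le> (C * \<sigma> t + C) / \<alpha>" using JC[OF tp] kpos[OF tp] ap by (simp add: divide_right_mono)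
      have "kap t / C0 \<le> kap t / (C/\<alpha>)" using C0 knn C ap by (intro divide_left_mono) auto
      also have "\<dots> = kap t * \<alpha> / C" using C ap by simp
      also have "\<dots> \<le> ((C * \<sigma> t + C) / \<alpha>) * \<alpha> / C"
        using \<open>kap t \<le> (C * \<sigma> t + C) / \<alpha>\<close> C ap by (intro divide_right_mono mult_right_mono) auto
      also have "\<dots> = \<sigma> t + 1" using C ap by (simp add: field_simps)
      finally show ?thesis using C0 by linarith
    qed
    show ?thesis unfolding sim_on_def using C0 up lo by (intro exI[of _ C0]) auto
  qed
  have kint: "integral_condition kap \<alpha>"
    unfolding integral_condition_def
  proof (intro exI[of _ "C*C*\<alpha> + C*C/\<alpha> + C/\<alpha>^2"] conjI allI impI)
    define D where "D = C*C*\<alpha> + C*C/\<alpha> + C/\<alpha>^2"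
    show "C*C*\<alpha> + C*C/\<alpha> + C/\<alpha>^2 > 0" using C ap by (intro add_pos_pos) auto
    fix y :: real assume y: "y > 0"
    have "(\<integral>\<^sup>+ t\<in>{1..}. ennreal (kap (y * t) / t powr (1 + \<alpha>)) \<partial>lborel)
       \<le> (\<integral>\<^sup>+ t. ennreal (C/\<alpha>) * (ennreal (sig0 (y*t) / t powr (1+\<alpha>)) * indicator {1..} t)
              + ennreal (C/\<alpha>) * (ennreal (t powr (-1-\<alpha>)) * indicator {1..} t) \<partial>lborel)"
    proof (rule nn_integral_mono)
      fix t :: real
      show "ennreal (kap (y * t) / t powr (1 + \<alpha>)) * indicator {1..} t
         \<le> ennreal (C/\<alpha>) * (ennreal (sig0 (y*t) / t powr (1+\<alpha>)) * indicator {1..} t)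
              + ennreal (C/\<alpha>) * (ennreal (t powr (-1-\<alpha>)) * indicator {1..} t)"
      proof (cases "t \<ge> 1")
        case True
        have yt: "y*t > 0" using y True by simp
        have tp: "t powr (1+\<alpha>) > 0" using True by simp
        have "kap (y*t) \<le> (C * \<sigma> (y*t) + C) / \<alpha>" using JC[OF yt] kpos[OF yt] ap by (simp add: divide_right_mono)
        hence "kap (y*t) / t powr (1+\<alpha>) \<le> ((C * \<sigma> (y*t) + C) / \<alpha>) / t powr (1+\<alpha>)"
          using tp by (intro divide_right_mono) auto
        also have "\<dots> = C/\<alpha> * (sig0 (y*t) / t powr (1+\<alpha>)) + C/\<alpha> * t powr (-1-\<alpha>)"
          using powr_neg1[of t \<alpha>] True yt sig0_eq[of "y*t"] by (simp add: add_divide_distrib)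
        finally have "ennreal (kap (y*t) / t powr (1+\<alpha>)) \<le> ennreal (C/\<alpha> * (sig0 (y*t) / t powr (1+\<alpha>)) + C/\<alpha> * t powr (-1-\<alpha>))"
          by (rule ennreal_leI)
        also have "\<dots> = ennreal (C/\<alpha>) * ennreal (sig0 (y*t) / t powr (1+\<alpha>)) + ennreal (C/\<alpha>) * ennreal (t powr (-1-\<alpha>))"
          using C ap yt tp nonnegD[of "y*t"] sig0_eq[of "y*t"]
          by (simp add: ennreal_plus[symmetric] ennreal_mult[symmetric] del: ennreal_plus ennreal_mult')
        finally show ?thesis using True by simp
      qed simp
    qed
    also have "\<dots> = ennreal (C/\<alpha>) * Ii y + ennreal (C/\<alpha>) * ennreal (1/\<alpha>)"
      using y by (subst nn_lin2) (measurable, simp add: tail1 alpha_pos Ii_sig0)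
    also have "\<dots> \<le> ennreal (C/\<alpha>) * ennreal (C * \<sigma> y + C) + ennreal (C/\<alpha>) * ennreal (1/\<alpha>)"
      using IC[OF y] by (intro add_right_mono mult_left_mono) auto
    also have "\<dots> = ennreal ((C/\<alpha>) * (C * \<sigma> y + C) + C/\<alpha>^2)"
      using C ap nonnegD[of y] y
      by (simp add: ennreal_plus[symmetric] ennreal_mult[symmetric] power2_eq_square del: ennreal_plus ennreal_mult')
    also have "\<dots> \<le> ennreal (D * kap y + D)"
    proof (rule ennreal_leI)
      have "(C/\<alpha>) * (C * \<sigma> y + C) + C/\<alpha>^2 = (C*C/\<alpha>) * \<sigma> y + (C*C/\<alpha> + C/\<alpha>^2)"
        by (simp add: algebra_simps)
      also have "(C*C/\<alpha>) * \<sigma> y \<le> (C*C/\<alpha>) * (\<alpha>^2 * kap y)"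
        using klow[of y] y C ap by (intro mult_left_mono) auto
      also have "(C*C/\<alpha>) * (\<alpha>^2 * kap y) = (C*C*\<alpha>) * kap y" using ap by (simp add: power2_eq_square)
      also have "(C*C*\<alpha>) * kap y + (C*C/\<alpha> + C/\<alpha>^2) \<le> D * kap y + D"
      proof (rule add_mono)
        show "(C*C*\<alpha>) * kap y \<le> D * kap y" unfolding D_def using knn[of y] C ap
          by (intro mult_right_mono) auto
        show "C*C/\<alpha> + C/\<alpha>^2 \<le> D" unfolding D_def using C ap by simp
      qed
      finally show "(C/\<alpha>) * (C * \<sigma> y + C) + C/\<alpha>^2 \<le> D * kap y + D" by simp
    qed
    finally show "(\<integral>\<^sup>+ t\<in>{1..}. ennreal (kap (y * t) / t powr (1 + \<alpha>)) \<partial>lborel)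
        \<le> ennreal ((C*C*\<alpha> + C*C/\<alpha> + C/\<alpha>^2) * kap y + (C*C*\<alpha> + C*C/\<alpha> + C/\<alpha>^2))"
      unfolding D_def .
  qed
  define g where "g = (\<lambda>u. kap (u powr (1/\<alpha>)))"
  have gtan: "g u \<le> (u/w) * g w + \<sigma> (w powr (1/\<alpha>)) / \<alpha>^2 * (1 - u/w)" if w: "w > 0" and u: "u \<ge> 0" for u w
  proof -
    define x where "x = w powr (1/\<alpha>)"
    have xp: "x > 0" unfolding x_def using w by simp
    have gw: "g w = Jr x / \<alpha>" unfolding g_def x_def[symmetric] using kpos[OF xp] .
    show ?thesis
    proof (cases "u = 0")
      case True
      have "g u = \<sigma> 0 / \<alpha>^2" unfolding g_def using True k0 by simp
      also have "\<dots> \<le> \<sigma> x / \<alpha>^2" using xp ap by (intro divide_right_mono monoD') auto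
      finally show ?thesis using True unfolding x_def by simp
    next
      case False
      hence up: "u > 0" using u by simp
      define y where "y = u powr (1/\<alpha>)"
      have yp: "y > 0" unfolding y_def using up by simp
      have gu: "g u = Jr y / \<alpha>" unfolding g_def y_def[symmetric] using kpos[OF yp] .
      have r: "(y/x) powr \<alpha> = u/w"
        unfolding x_def y_def using up w ap by (simp add: powr_divide[symmetric] powr_powr)
      have "Jr y \<le> (y/x) powr \<alpha> * Jr x + \<sigma> x / \<alpha> * (1 - (y/x) powr \<alpha>)" using Jt[OF xp yp] .
      hence "Jr y / \<alpha> \<le> ((u/w) * Jr x + \<sigma> x / \<alpha> * (1 - u/w)) / \<alpha>" unfolding r using ap by (intro divide_right_mono) auto
      also have "\<dots> = (u/w) * (Jr x / \<alpha>) + \<sigma> x / \<alpha>^2 * (1 - u/w)" using ap by (simp add: field_simps power2_eq_square)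
      finally show ?thesis unfolding gu gw x_def by simp
    qed
  qed
  have conc: "concave_on {0..} g"
    unfolding concave_on_def
  proof (rule convex_onI)
    show "convex {0::real..}" by (rule convex_real_interval)
    fix t x1 x2 :: real assume t: "0 < t" "t < 1" and x1: "x1 \<in> {0..}" and x2: "x2 \<in> {0..}"
    hence x12: "x1 \<ge> 0" "x2 \<ge> 0" by auto
    define w where "w = (1 - t) * x1 + t * x2"
    have w0: "w \<ge> 0" unfolding w_def using t x12 by simp
    show "- g ((1 - t) *\<^sub>R x1 + t *\<^sub>R x2) \<le> (1 - t) * - g x1 + t * - g x2"
    proof (cases "w = 0")
      case True
      have a: "(1-t)*x1 \<ge> 0" "t*x2 \<ge> 0" using t x12 by simp_all
      hence "(1-t)*x1 = 0" "t*x2 = 0" using True unfolding w_def by linarith+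
      hence "x1 = 0" "x2 = 0" using t by simp_all
      thus ?thesis by (simp add: algebra_simps)
    next
      case False
      hence wp: "w > 0" using w0 by simp
      define c where "c = \<sigma> (w powr (1/\<alpha>)) / \<alpha>^2"
      have "(1 - t) * g x1 + t * g x2 \<le> (1 - t) * ((x1/w) * g w + c * (1 - x1/w)) + t * ((x2/w) * g w + c * (1 - x2/w))"
        using gtan[OF wp x12(1)] gtan[OF wp x12(2)] t unfolding c_def
        by (intro add_mono mult_left_mono) auto
      also have "\<dots> = g w"
      proof -
        have "(1 - t) * (x1/w) + t * (x2/w) = ((1 - t) * x1 + t * x2) / w" by (simp add: add_divide_distrib)
        also have "\<dots> = 1" unfolding w_def[symmetric] using wp by simp
        finally have "(1 - t) * (x1/w) + t * (x2/w) = 1" .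
        have "(1 - t) * ((x1/w) * g w + c * (1 - x1/w)) + t * ((x2/w) * g w + c * (1 - x2/w))
             = g w * ((1 - t) * (x1/w) + t * (x2/w)) + c * (1 - ((1 - t) * (x1/w) + t * (x2/w)))"
          by (rule aff_comb)
        also have "\<dots> = g w" using \<open>(1 - t) * (x1/w) + t * (x2/w) = 1\<close> by simp
        finally show ?thesis .
      qed
      finally show ?thesis unfolding w_def by simp
    qed
  qed
  show ?thesis
    using kmono knn ksim k0 kint conc unfolding g_def by (intro exI[of _ kap]) (auto simp: power2_eq_square)
qed

lemma cond_ii_Hub:
  "(\<exists>\<kappa> :: real \<Rightarrow> real. mono_on {0..} \<kappa> \<and> (\<forall>t\<ge>0. \<kappa> t \<ge> 0) \<and>
         sim_on {0..} \<sigma> \<kappa> \<and> \<kappa> 0 = \<sigma> 0 / \<alpha>\<^sup>2 \<and> integral_condition \<kappa> \<alpha> \<and>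
         concave_on {0..} (\<lambda>t. \<kappa> (t powr (1 / \<alpha>)))) \<longleftrightarrow> Hub"
  using cond_i_ii cond_ii_i cond_i_Hub by blast

end

lemma nn_pow0:
  fixes \<beta> y :: real
  assumes b: "\<beta> > 0" and y: "y \<ge> 0"
  shows "(\<integral>\<^sup>+ t. ennreal (t powr (\<beta>-1)) * indicator {0..y} t \<partial>lborel) = ennreal (y powr \<beta> / \<beta>)"
proof -
  have hi: "((\<lambda>x. x powr (\<beta>-1)) has_integral (y powr (\<beta>-1+1) / (\<beta>-1+1))) {0..y}"
    by (rule has_integral_powr_from_0) (use b y in auto)
  have "integral\<^sup>N lborel (\<lambda>x. indicator {0..y} x * x powr (\<beta>-1)) = y powr (\<beta>-1+1) / (\<beta>-1+1)"
    by (rule nn_integral_has_integral_lebesgue[OF _ hi]) auto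
  moreover have "(\<integral>\<^sup>+ t. ennreal (t powr (\<beta>-1)) * indicator {0..y} t \<partial>lborel) = integral\<^sup>N lborel (\<lambda>x. indicator {0..y} x * x powr (\<beta>-1))"
    by (intro nn_integral_cong) (auto simp: indicator_def)
  ultimately show ?thesis by simp
qed

context sig
begin

lemma Hub_cond_viii:
  assumes Hub
  shows "\<exists>C>0. \<forall>y\<ge>a. (\<integral>\<^sup>+ t\<in>{a..y}. ennreal (t powr \<alpha> / \<sigma> t / t) \<partial>lborel)
                       \<le> ennreal (C * y powr \<alpha> / \<sigma> y)"
proof -
  obtain \<gamma> M where "hub \<gamma> M" using assms unfolding Hub_def by blast
  hence g: "0 < \<gamma>" "\<gamma> < \<alpha>" "M > 0" and H: "\<forall>x\<ge>a. \<forall>l\<ge>1. \<sigma> (l*x) \<le> M * l powr \<gamma> * \<sigma> x"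
    unfolding hub_def by auto
  show ?thesis
  proof (intro exI[of _ "M / (\<alpha> - \<gamma>)"] conjI allI impI)
    show "M / (\<alpha> - \<gamma>) > 0" using g by simp
    fix y assume y: "y \<ge> a"
    have sy: "\<sigma> y > 0" using posD[OF y] .
    have y0: "y \<ge> 0" using y a_nonneg by simp
    define c where "c = M * y powr \<gamma> / \<sigma> y"
    have c0: "c \<ge> 0" unfolding c_def using g sy by simp
    have "(\<integral>\<^sup>+ t\<in>{a..y}. ennreal (t powr \<alpha> / \<sigma> t / t) \<partial>lborel)
        \<le> (\<integral>\<^sup>+ t. ennreal c * (ennreal (t powr ((\<alpha>-\<gamma>)-1)) * indicator {0..y} t) \<partial>lborel)"
    proof (rule nn_integral_mono)
      fix t :: real
      show "ennreal (t powr \<alpha> / \<sigma> t / t) * indicator {a..y} t \<le> ennreal c * (ennreal (t powr ((\<alpha>-\<gamma>)-1)) * indicator {0..y} t)"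
      proof (cases "t \<in> {a..y} \<and> t > 0")
        case True
        hence t: "a \<le> t" "t \<le> y" "t > 0" by auto
        have st: "\<sigma> t > 0" using posD t by auto
        have "\<sigma> y = \<sigma> ((y/t) * t)" using t by simp
        also have "\<dots> \<le> M * (y/t) powr \<gamma> * \<sigma> t" using H[rule_format, of t "y/t"] t by simp
        finally have sy': "\<sigma> y \<le> M * (y/t) powr \<gamma> * \<sigma> t" .
        have "t powr \<alpha> / \<sigma> t / t = (t powr (\<alpha>-1)) / \<sigma> t" using t by (simp add: powr_diff)
        also have "\<dots> \<le> (t powr (\<alpha>-1)) * (M * (y/t) powr \<gamma> / \<sigma> y)"
        proof -
          have "1 / \<sigma> t \<le> M * (y/t) powr \<gamma> / \<sigma> y" using sy' st sy by (simp add: field_simps)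
          hence "t powr (\<alpha>-1) * (1 / \<sigma> t) \<le> t powr (\<alpha>-1) * (M * (y/t) powr \<gamma> / \<sigma> y)"
            by (intro mult_left_mono) auto
          thus ?thesis by simp
        qed
        also have "\<dots> = c * t powr ((\<alpha>-\<gamma>)-1)"
        proof -
          have "(y/t) powr \<gamma> = y powr \<gamma> / t powr \<gamma>" using t y0 by (simp add: powr_divide)
          moreover have "t powr ((\<alpha>-\<gamma>)-1) = t powr (\<alpha>-1) / t powr \<gamma>"
            by (simp add: powr_diff[symmetric] algebra_simps)
          ultimately show ?thesis unfolding c_def by (simp add: field_simps)
        qed
        finally have "ennreal (t powr \<alpha> / \<sigma> t / t) \<le> ennreal c * ennreal (t powr ((\<alpha>-\<gamma>)-1))"
          using c0 by (simp add: ennreal_mult[symmetric] ennreal_leI del: ennreal_mult')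
        moreover have "t \<in> {0..y}" using t by auto
        ultimately show ?thesis using True by simp
      next
        case False
        hence "t \<notin> {a..y} \<or> t = 0" using a_nonneg by auto
        thus ?thesis by auto
      qed
    qed
    also have "\<dots> = ennreal c * ennreal (y powr (\<alpha>-\<gamma>) / (\<alpha>-\<gamma>))"
      using g y0 by (subst nn_integral_cmult) (measurable, simp add: nn_pow0)
    also have "\<dots> = ennreal (M / (\<alpha> - \<gamma>) * y powr \<alpha> / \<sigma> y)"
    proof -
      have "y powr \<gamma> * y powr (\<alpha>-\<gamma>) = y powr \<alpha>" by (simp add: powr_add[symmetric])
      hence "c * (y powr (\<alpha>-\<gamma>) / (\<alpha>-\<gamma>)) = M / (\<alpha> - \<gamma>) * y powr \<alpha> / \<sigma> y"
        unfolding c_def using g sy by (simp add: field_simps)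
      thus ?thesis using c0 g by (simp add: ennreal_mult[symmetric] del: ennreal_mult')
    qed
    finally show "(\<integral>\<^sup>+ t\<in>{a..y}. ennreal (t powr \<alpha> / \<sigma> t / t) \<partial>lborel) \<le> ennreal (M / (\<alpha> - \<gamma>) * y powr \<alpha> / \<sigma> y)" .
  qed
qed

end

context sig
begin

lemma cond_viii_EvIV:
  assumes "\<exists>C>0. \<forall>y\<ge>a. (\<integral>\<^sup>+ t\<in>{a..y}. ennreal (t powr \<alpha> / \<sigma> t / t) \<partial>lborel)
                       \<le> ennreal (C * y powr \<alpha> / \<sigma> y)"
  shows EvIV
proof -
  obtain C where C: "C > 0" and HC: "\<And>y. y \<ge> a \<Longrightarrow> (\<integral>\<^sup>+ t\<in>{a..y}. ennreal (t powr \<alpha> / \<sigma> t / t) \<partial>lborel)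
                       \<le> ennreal (C * y powr \<alpha> / \<sigma> y)" using assms by blast
  define f where "f = (\<lambda>t. ennreal (t powr \<alpha> / sig0 t / t))"
  have fm[measurable]: "f \<in> borel_measurable borel" unfolding f_def by measurable
  define F where "F = (\<lambda>y. \<integral>\<^sup>+ t. f t * indicator {a..y} t \<partial>lborel)"
  define G where "G = (\<lambda>y. y powr \<alpha> / \<sigma> y)"
  define c where "c = (2::real) powr (-1-\<alpha>)"
  have c: "c > 0" unfolding c_def by simp
  have FC: "F y \<le> ennreal (C * G y)" if y: "y \<ge> a" for y
  proof -
    have "F y = (\<integral>\<^sup>+ t\<in>{a..y}. ennreal (t powr \<alpha> / \<sigma> t / t) \<partial>lborel)"
      unfolding F_def f_def using a_nonneg by (intro nn_integral_cong) (auto simp: indicator_def sig0_eq)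
    thus ?thesis using HC[OF y] unfolding G_def by simp
  qed
  have block: "ennreal (c * G z) \<le> (\<integral>\<^sup>+ t. f t * indicator {z/2<..z} t \<partial>lborel)" if z: "z > 0" "z/2 \<ge> a" for z
  proof -
    define k where "k = (z/2) powr \<alpha> / \<sigma> z / z"
    have sz: "\<sigma> z > 0" using posD z by simp
    have k0: "k \<ge> 0" unfolding k_def using sz z by simp
    have e1: "(z/2) powr \<alpha> = z powr \<alpha> / 2 powr \<alpha>" using z by (simp add: powr_divide)
    have e2: "c = 1 / (2 * 2 powr \<alpha>)" unfolding c_def
      using powr_minus_divide[of "2::real" "\<alpha>+1"] by (simp add: powr_add minus_add_distrib add.commute)
    have P: "2 powr \<alpha> > (0::real)" by simp
    have "k * (z - z/2) = (z powr \<alpha> / 2 powr \<alpha>) / \<sigma> z / 2" unfolding k_def e1 using z by (simp add: field_simps)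
    also have "\<dots> = c * G z" unfolding e2 G_def using P sz by (simp add: field_simps)
    finally have "ennreal (c * G z) = ennreal (k * (z - z/2))" by simp
    also have "\<dots> = (\<integral>\<^sup>+ t. ennreal k * indicator {z/2<..z} t \<partial>lborel)"
    proof -
      have "ennreal (k * (z - z/2)) = ennreal k * ennreal (z - z/2)" by (rule ennreal_mult) (use z k0 in auto)
      also have "\<dots> = ennreal k * emeasure lborel {z/2<..z}" using z by simp
      also have "\<dots> = (\<integral>\<^sup>+ t. ennreal k * indicator {z/2<..z} t \<partial>lborel)"
        by (rule nn_integral_cmult_indicator[symmetric]) simp
      finally show ?thesis .
    qed
    also have "\<dots> \<le> (\<integral>\<^sup>+ t. f t * indicator {z/2<..z} t \<partial>lborel)"
    proof (rule nn_integral_mono)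
      fix t :: real
      show "ennreal k * indicator {z/2<..z} t \<le> f t * indicator {z/2<..z} t"
      proof (cases "t \<in> {z/2<..z}")
        case True
        hence t: "z/2 < t" "t \<le> z" by auto
        have tp: "t > 0" "t \<ge> a" using t z by auto
        have st: "\<sigma> t > 0" using posD tp by simp
        have "(z/2) powr \<alpha> \<le> t powr \<alpha>" using t z alpha_pos by (intro powr_mono2) auto
        moreover have "\<sigma> t \<le> \<sigma> z" using t tp by (intro monoD') auto
        ultimately have "(z/2) powr \<alpha> / \<sigma> z \<le> t powr \<alpha> / \<sigma> t"
          using st by (intro frac_le) auto
        hence "(z/2) powr \<alpha> / \<sigma> z / z \<le> t powr \<alpha> / \<sigma> t / z" using z by (intro divide_right_mono) auto
        also have "\<dots> \<le> t powr \<alpha> / \<sigma> t / t" using t tp st by (intro divide_left_mono) auto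
        finally have "k \<le> t powr \<alpha> / sig0 t / t" unfolding k_def using tp by (simp add: sig0_eq)
        thus ?thesis using True unfolding f_def by (simp add: ennreal_leI)
      qed simp
    qed
    finally show ?thesis .
  qed
  have Flow: "ennreal (c * G z) \<le> F z" if z: "z > 0" "z/2 \<ge> a" for z
  proof -
    have "(\<integral>\<^sup>+ t. f t * indicator {z/2<..z} t \<partial>lborel) \<le> F z"
      unfolding F_def using z by (intro nn_integral_mono) (auto simp: indicator_def)
    thus ?thesis using block[OF z] by simp
  qed
  have Fsplit: "F (2*y) = F y + (\<integral>\<^sup>+ t. f t * indicator {y<..2*y} t \<partial>lborel)" if y: "y \<ge> a" for y
  proof -
    have y0: "y \<ge> 0" using y a_nonneg by simp
    have "F (2*y) = (\<integral>\<^sup>+ t. f t * indicator {a..y} t + f t * indicator {y<..2*y} t \<partial>lborel)"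
      unfolding F_def using y y0 by (intro nn_integral_cong) (auto simp: indicator_def)
    also have "\<dots> = F y + (\<integral>\<^sup>+ t. f t * indicator {y<..2*y} t \<partial>lborel)"
      unfolding F_def by (rule nn_integral_add) measurable
    finally show ?thesis .
  qed
  define Fr where "Fr = (\<lambda>y. enn2real (F y))"
  have Ffin: "F y = ennreal (Fr y)" if "y \<ge> a" for y
  proof -
    have "F y < top" using FC[OF that] by (metis ennreal_less_top order_le_less_trans)
    thus ?thesis unfolding Fr_def by simp
  qed
  have Fr0: "Fr y \<ge> 0" for y unfolding Fr_def by simp
  have G0: "G y > 0" if "y > 0" "y \<ge> a" for y unfolding G_def using that posD by simp
  have FrC: "Fr y \<le> C * G y" if "y \<ge> a" "y > 0" for y
    using FC[OF that(1)] Ffin[OF that(1)] G0[OF that(2,1)] C by (simp add: ennreal_le_iff)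
  have Frlow: "c * G z \<le> Fr z" if "z > 0" "z/2 \<ge> a" for z
  proof -
    have za: "z \<ge> a" using that a_nonneg by simp
    show ?thesis using Flow[OF that] Ffin[OF za] Fr0 by (simp add: ennreal_le_iff)
  qed
  define T where "T = max a 1"
  have T: "T > 0" "T \<ge> a" unfolding T_def by auto
  define q where "q = max 0 (1 - c / C)"
  have q: "0 \<le> q" "q < 1" unfolding q_def using c C by auto
  have step: "Fr y \<le> q * Fr (2*y)" if y: "y \<ge> T" for y
  proof -
    have ya: "y \<ge> a" "y > 0" using y T by auto
    have y2: "2*y \<ge> a" "2*y > 0" "(2*y)/2 \<ge> a" using ya by auto
    obtain B where B: "(\<integral>\<^sup>+ t. f t * indicator {y<..2*y} t \<partial>lborel) = B" by simp
    have "B \<le> F y + B" by (rule add_increasing) auto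
    also have "F y + B = F (2*y)" using Fsplit[OF ya(1)] B by simp
    also have "\<dots> < top" using Ffin[OF y2(1)] by simp
    finally have Bfin: "B < top" .
    define b where "b = enn2real B"
    have Bb: "B = ennreal b" "b \<ge> 0" using Bfin unfolding b_def by auto
    have eq: "Fr (2*y) = Fr y + b"
    proof -
      have "ennreal (Fr (2*y)) = ennreal (Fr y + b)"
        using Fsplit[OF ya(1)] Ffin[OF ya(1)] Ffin[OF y2(1)] B Bb Fr0 by (simp add: ennreal_plus)
      thus ?thesis using Bb Fr0 by (subst (asm) ennreal_inj) auto
    qed
    have bl: "c * G (2*y) \<le> b"
    proof -
      have "ennreal (c * G (2*y)) \<le> B" using block[of "2*y"] y2 B by simp
      thus ?thesis using Bb by (simp add: ennreal_le_iff)
    qed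
    have "c / C * Fr (2*y) \<le> c / C * (C * G (2*y))" using FrC[OF y2(1,2)] c C by (intro mult_left_mono) auto
    also have "\<dots> = c * G (2*y)" using C by simp
    finally have "c / C * Fr (2*y) \<le> b" using bl by linarith
    moreover have "(1 - c / C) * Fr (2*y) = Fr (2*y) - c / C * Fr (2*y)" by (simp add: algebra_simps)
    ultimately have "Fr y \<le> (1 - c / C) * Fr (2*y)" using eq by linarith
    also have "\<dots> \<le> q * Fr (2*y)" unfolding q_def using Fr0 by (intro mult_right_mono) auto
    finally show ?thesis .
  qed
  have iter: "Fr y \<le> q^n * Fr (2^n*y)" if y: "y \<ge> T" for n y
  proof (induction n)
    case 0 then show ?case by simp
  next
    case (Suc n)
    have "(1::real) \<le> 2^n" by simp
    from mult_right_mono[OF this, of y] have "y \<le> 2^n*y" using y T by simp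
    hence yn: "2^n*y \<ge> T" using y by linarith
    have "Fr y \<le> q^n * Fr (2^n*y)" by (rule Suc)
    also have "\<dots> \<le> q^n * (q * Fr (2*(2^n*y)))" using step[OF yn] q by (intro mult_left_mono) auto
    also have "2*(2^n*y) = 2^Suc n * y" by simp
    finally show ?case by (simp add: algebra_simps)
  qed
  obtain n0 where n0: "q^n0 < c / C" using real_arch_pow_inv[of "c/C" q] q c C by auto
  define n where "n = Suc n0"
  have qn: "q^n \<le> q^n0" unfolding n_def using q mult_left_le_one_le[of "q^n0" q] by simp
  define K :: real where "K = 2^n"
  have "(1::real) \<le> 2^n0" by simp
  hence K: "K > 1" unfolding K_def n_def power_Suc by linarith
  define \<rho> where "\<rho> = C / c * q^n * K powr \<alpha>"
  have rho: "\<rho> < K powr \<alpha>"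
  proof -
    have "q^n < c / C" using n0 qn by linarith
    hence "C / c * q^n < C / c * (c / C)" using C c by (intro mult_strict_left_mono) auto
    hence "C / c * q^n < 1" using C c by simp
    hence "(C / c * q^n) * K powr \<alpha> < 1 * K powr \<alpha>" by (rule mult_strict_right_mono) (use K in simp)
    thus ?thesis unfolding \<rho>_def by simp
  qed
  have "\<forall>\<^sub>F y in at_top. \<sigma> (K*y) \<le> \<rho> * \<sigma> y"
    using eventually_ge_at_top[of "2*T"]
  proof eventually_elim
    case (elim y)
    have yT: "y \<ge> T" "y > 0" "y/2 \<ge> a" "y \<ge> a" using elim T by auto
    have yK: "y \<le> K * y" using K yT by (simp add: mult_le_cancel_right1)
    have Ky: "K*y > 0" "K*y \<ge> a" using yT yK by linarith+
    have sy: "\<sigma> y > 0" "\<sigma> (K*y) > 0" using posD yT Ky by auto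
    have "c * G y \<le> Fr y" by (rule Frlow[OF yT(2,3)])
    also have "\<dots> \<le> q^n * Fr (K*y)" unfolding K_def by (rule iter[OF yT(1)])
    also have "\<dots> \<le> q^n * (C * G (K*y))" using FrC[OF Ky(2,1)] q by (intro mult_left_mono) auto
    finally have "c * (y powr \<alpha> / \<sigma> y) \<le> q^n * (C * ((K*y) powr \<alpha> / \<sigma> (K*y)))" unfolding G_def .
    moreover have "(K*y) powr \<alpha> = K powr \<alpha> * y powr \<alpha>" using K yT by (simp add: powr_mult)
    ultimately have "c * y powr \<alpha> * \<sigma> (K*y) \<le> q^n * C * K powr \<alpha> * y powr \<alpha> * \<sigma> y"
      using sy by (simp add: field_simps)
    hence "y powr \<alpha> * (c * \<sigma> (K*y)) \<le> y powr \<alpha> * (q^n * C * K powr \<alpha> * \<sigma> y)" by (simp add: algebra_simps)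
    hence "c * \<sigma> (K*y) \<le> q^n * C * K powr \<alpha> * \<sigma> y" using yT by (simp add: mult_le_cancel_left)
    hence "\<sigma> (K*y) \<le> (q^n * C * K powr \<alpha> * \<sigma> y) / c" using c by (simp add: field_simps)
    also have "\<dots> = \<rho> * \<sigma> y" unfolding \<rho>_def using c by (simp add: field_simps)
    finally show ?case .
  qed
  thus ?thesis unfolding EvIV_def using K rho by blast
qed

lemma cond_viii_Hub:
  "(\<exists>C>0. \<forall>y\<ge>a. (\<integral>\<^sup>+ t\<in>{a..y}. ennreal (t powr \<alpha> / \<sigma> t / t) \<partial>lborel)
                       \<le> ennreal (C * y powr \<alpha> / \<sigma> y)) \<longleftrightarrow> Hub"
  using cond_viii_EvIV EvIV_Hub Hub_cond_viii by blast

end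

lemma mvt_pow:
  fixes x e :: real
  assumes x: "x > 0"
  shows "\<exists>z. x < z \<and> z < x + 1 \<and> (x+1) powr e - x powr e = e * z powr (e - 1)"
proof -
  have "\<exists>z. x < z \<and> z < x + 1 \<and> ((x+1) powr e - x powr e = ((x+1) - x) * (e * z powr (e - 1)))"
  proof (rule MVT2)
    fix t assume "x \<le> t" "t \<le> x + 1"
    hence t: "t > 0" using x by simp
    show "((\<lambda>t. t powr e) has_real_derivative e * t powr (e - 1)) (at t)"
      using t by (auto intro!: derivative_eq_intros)
  qed simp
  thus ?thesis by simp
qed

lemma mvt_neg:
  fixes x \<beta> :: real
  assumes x: "x > 0" and b: "\<beta> > 0"
  shows "\<beta> * (x+1) powr (-1-\<beta>) \<le> x powr (-\<beta>) - (x+1) powr (-\<beta>)"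
proof -
  obtain z where z: "x < z" "z < x+1" "(x+1) powr (-\<beta>) - x powr (-\<beta>) = (-\<beta>) * z powr (-\<beta> - 1)"
    using mvt_pow[OF x, of "-\<beta>"] by blast
  have "(x+1) powr (-1-\<beta>) \<le> z powr (-1-\<beta>)" using z x b by (intro powr_mono2') auto
  hence "\<beta> * (x+1) powr (-1-\<beta>) \<le> \<beta> * z powr (-1-\<beta>)" using b by (intro mult_left_mono) auto
  also have ee: "-\<beta> - 1 = -1 - \<beta>" by simp
  have "\<beta> * z powr (-1-\<beta>) = x powr (-\<beta>) - (x+1) powr (-\<beta>)" using z(3) unfolding ee by (simp add: algebra_simps)
  finally show ?thesis .
qed

lemma mvt_pos:
  fixes x \<beta> :: real
  assumes x: "x > 0" and b: "\<beta> > 0" "\<beta> \<le> 1"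
  shows "\<beta> * (x+1) powr (\<beta>-1) \<le> (x+1) powr \<beta> - x powr \<beta>"
proof -
  obtain z where z: "x < z" "z < x+1" "(x+1) powr \<beta> - x powr \<beta> = \<beta> * z powr (\<beta> - 1)"
    using mvt_pow[OF x, of "\<beta>"] by blast
  have "(x+1) powr (\<beta>-1) \<le> z powr (\<beta>-1)" using z x b by (intro powr_mono2') auto
  hence "\<beta> * (x+1) powr (\<beta>-1) \<le> \<beta> * z powr (\<beta>-1)" using b by (intro mult_left_mono) auto
  also have "\<dots> = (x+1) powr \<beta> - x powr \<beta>" using z(3) by simp
  finally show ?thesis .
qed

lemma sum_pow_le:
  fixes \<beta> :: real
  assumes b: "\<beta> > 0" "\<beta> \<le> 1" and p: "p \<ge> 1"
  shows "(\<Sum>k=1..p. real k powr (\<beta>-1)) \<le> real p powr \<beta> / \<beta>"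
  using p
proof (induction p rule: dec_induct)
  case base
  show ?case using b by (simp add: field_simps)
next
  case (step n)
  have n: "real n > 0" using step by simp
  have "(\<Sum>k=1..Suc n. real k powr (\<beta>-1)) = (\<Sum>k=1..n. real k powr (\<beta>-1)) + (real n + 1) powr (\<beta>-1)"
    using step by (simp add: sum.cl_ivl_Suc add.commute)
  also have "\<dots> \<le> real n powr \<beta> / \<beta> + (real n + 1) powr (\<beta>-1)" using step by simp
  also have "(real n + 1) powr (\<beta>-1) \<le> ((real n + 1) powr \<beta> - real n powr \<beta>) / \<beta>"
    using mvt_pos[OF n b] b by (simp add: field_simps)
  also have "real n powr \<beta> / \<beta> + ((real n + 1) powr \<beta> - real n powr \<beta>) / \<beta> = real (Suc n) powr \<beta> / \<beta>"
    by (simp add: add_divide_distrib[symmetric] add.commute)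
  finally show ?case by simp
qed

lemma tail_sum_le:
  fixes \<beta> :: real and p :: nat
  assumes b: "\<beta> > 0" and p: "p \<ge> 1"
  shows "(\<Sum>j. ennreal (real (p + j) powr (-1-\<beta>))) \<le> ennreal ((1 + 1/\<beta>) * real p powr (-\<beta>))"
proof -
  have claim: "(\<Sum>j<Suc N. real (p + j) powr (-1-\<beta>)) + real (p + N) powr (-\<beta>) / \<beta>
      \<le> real p powr (-1-\<beta>) + real p powr (-\<beta>) / \<beta>" for N
  proof (induction N)
    case 0 then show ?case by simp
  next
    case (Suc N)
    have x: "real (p + N) > 0" using p by simp
    have m: "\<beta> * (real (p+N) + 1) powr (-1-\<beta>) \<le> real (p+N) powr (-\<beta>) - (real (p+N) + 1) powr (-\<beta>)"
      by (rule mvt_neg[OF x b])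
    have e: "real (p + Suc N) = real (p+N) + 1" by simp
    have "(\<Sum>j<Suc (Suc N). real (p + j) powr (-1-\<beta>)) + real (p + Suc N) powr (-\<beta>) / \<beta>
       = (\<Sum>j<Suc N. real (p + j) powr (-1-\<beta>)) + ((real (p+N) + 1) powr (-1-\<beta>) + (real (p+N) + 1) powr (-\<beta>) / \<beta>)"
      by (simp only: sum.lessThan_Suc e)
    also have "(real (p+N) + 1) powr (-1-\<beta>) + (real (p+N) + 1) powr (-\<beta>) / \<beta> \<le> real (p + N) powr (-\<beta>) / \<beta>"
    proof -
      have "(real (p+N) + 1) powr (-1-\<beta>) + (real (p+N) + 1) powr (-\<beta>) / \<beta>
          = (\<beta> * (real (p+N) + 1) powr (-1-\<beta>) + (real (p+N) + 1) powr (-\<beta>)) / \<beta>"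
        using b by (simp add: add_divide_distrib)
      also have "\<dots> \<le> real (p + N) powr (-\<beta>) / \<beta>" using m b by (intro divide_right_mono) auto
      finally show ?thesis .
    qed
    finally show ?case using Suc by linarith
  qed
  have pb: "real p powr (-1-\<beta>) \<le> real p powr (-\<beta>)"
    using p by (intro powr_mono) auto
  have bound: "(\<Sum>j<N. real (p + j) powr (-1-\<beta>)) \<le> (1 + 1/\<beta>) * real p powr (-\<beta>)" for N
  proof -
    have "(\<Sum>j<N. real (p + j) powr (-1-\<beta>)) \<le> (\<Sum>j<Suc N. real (p + j) powr (-1-\<beta>))"
      by (simp add: sum.lessThan_Suc)
    also have "\<dots> \<le> real p powr (-1-\<beta>) + real p powr (-\<beta>) / \<beta>"
      using claim[of N] b by (smt (verit) divide_nonneg_pos powr_ge_zero)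
    also have "\<dots> \<le> (1 + 1/\<beta>) * real p powr (-\<beta>)" using pb by (simp add: algebra_simps)
    finally show ?thesis .
  qed
  show ?thesis
  proof (rule suminf_le_const)
    show "summable (\<lambda>j. ennreal (real (p + j) powr (-1-\<beta>)))" by simp
    fix N
    show "(\<Sum>j<N. ennreal (real (p + j) powr (-1-\<beta>))) \<le> ennreal ((1 + 1/\<beta>) * real p powr (-\<beta>))"
      using bound[of N] by (simp add: ennreal_leI)
  qed
qed


context sig
begin

lemma Hub_cond_ix:
  assumes Hub
  shows "\<exists>C>0. \<forall>p::nat. p \<ge> nat \<lceil>a\<rceil> + 1 \<longrightarrow>
         (\<Sum>k = nat \<lceil>a\<rceil> + 1..p. real k powr (\<alpha> - 1) / \<sigma> (real k))
           \<le> C * real p powr \<alpha> / \<sigma> (real p)"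
proof -
  obtain \<gamma>0 M where "hub \<gamma>0 M" using assms unfolding Hub_def by blast
  hence g0: "0 < \<gamma>0" "\<gamma>0 < \<alpha>" "M > 0" and H0: "\<forall>x\<ge>a. \<forall>l\<ge>1. \<sigma> (l*x) \<le> M * l powr \<gamma>0 * \<sigma> x"
    unfolding hub_def by auto
  define \<gamma> where "\<gamma> = max \<gamma>0 (\<alpha> - 1/2)"
  define \<beta> where "\<beta> = \<alpha> - \<gamma>"
  have b: "\<beta> > 0" "\<beta> \<le> 1" unfolding \<beta>_def \<gamma>_def using g0 by auto
  have H: "\<sigma> (l*x) \<le> M * l powr \<gamma> * \<sigma> x" if "x \<ge> a" "l \<ge> 1" for x l
  proof -
    have "\<sigma> (l*x) \<le> M * l powr \<gamma>0 * \<sigma> x" using H0 that by auto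
    also have "\<dots> \<le> M * l powr \<gamma> * \<sigma> x"
      using that g0 posD[of x] unfolding \<gamma>_def by (intro mult_right_mono mult_left_mono powr_mono) auto
    finally show ?thesis .
  qed
  define n0 where "n0 = nat \<lceil>a\<rceil> + 1"
  show ?thesis
  proof (intro exI[of _ "M / \<beta>"] conjI allI impI)
    show "M / \<beta> > 0" using g0 b by simp
    fix p :: nat assume p: "p \<ge> nat \<lceil>a\<rceil> + 1"
    have pa: "real p \<ge> a" "p \<ge> 1" using p by linarith+
    have sp: "\<sigma> (real p) > 0" using posD pa by simp
    define c where "c = M * real p powr \<gamma> / \<sigma> (real p)"
    have c0: "c \<ge> 0" unfolding c_def using g0 sp by simp
    have "(\<Sum>k = nat \<lceil>a\<rceil> + 1..p. real k powr (\<alpha> - 1) / \<sigma> (real k)) \<le> (\<Sum>k = nat \<lceil>a\<rceil> + 1..p. c * real k powr (\<beta> - 1))"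
    proof (rule sum_mono)
      fix k assume "k \<in> {nat \<lceil>a\<rceil> + 1..p}"
      hence k: "real k \<ge> a" "k \<le> p" "k \<ge> 1" by (auto, linarith)
      have kp: "real k > 0" using k by simp
      have sk: "\<sigma> (real k) > 0" using posD k by simp
      have "\<sigma> (real p) = \<sigma> ((real p / real k) * real k)" using kp by simp
      also have "\<dots> \<le> M * (real p / real k) powr \<gamma> * \<sigma> (real k)" using H[of "real k" "real p / real k"] k kp by simp
      finally have sy: "\<sigma> (real p) \<le> M * (real p / real k) powr \<gamma> * \<sigma> (real k)" .
      have "1 / \<sigma> (real k) \<le> M * (real p / real k) powr \<gamma> / \<sigma> (real p)" using sy sk sp by (simp add: field_simps)
      hence "real k powr (\<alpha> - 1) * (1 / \<sigma> (real k)) \<le> real k powr (\<alpha> - 1) * (M * (real p / real k) powr \<gamma> / \<sigma> (real p))"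
        by (intro mult_left_mono) auto
      also have "\<dots> = c * real k powr (\<beta> - 1)"
      proof -
        have "(real p / real k) powr \<gamma> = real p powr \<gamma> / real k powr \<gamma>" using kp by (simp add: powr_divide)
        moreover have "real k powr (\<beta> - 1) = real k powr (\<alpha>-1) / real k powr \<gamma>"
          unfolding \<beta>_def by (simp add: powr_diff[symmetric] algebra_simps)
        ultimately show ?thesis unfolding c_def by (simp add: field_simps)
      qed
      finally show "real k powr (\<alpha> - 1) / \<sigma> (real k) \<le> c * real k powr (\<beta> - 1)" by simp
    qed
    also have "\<dots> = c * (\<Sum>k = nat \<lceil>a\<rceil> + 1..p. real k powr (\<beta> - 1))" by (simp add: sum_distrib_left)
    also have "(\<Sum>k = nat \<lceil>a\<rceil> + 1..p. real k powr (\<beta> - 1)) \<le> (\<Sum>k = 1..p. real k powr (\<beta> - 1))"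
      by (rule sum_mono2) auto
    also have "\<dots> \<le> real p powr \<beta> / \<beta>" by (rule sum_pow_le[OF b pa(2)])
    finally have "(\<Sum>k = nat \<lceil>a\<rceil> + 1..p. real k powr (\<alpha> - 1) / \<sigma> (real k)) \<le> c * (real p powr \<beta> / \<beta>)"
      using c0 by (simp add: mult_left_mono)
    also have "c * (real p powr \<beta> / \<beta>) = M / \<beta> * real p powr \<alpha> / \<sigma> (real p)"
    proof -
      have "real p powr \<gamma> * real p powr \<beta> = real p powr \<alpha>" unfolding \<beta>_def by (simp add: powr_add[symmetric])
      thus ?thesis unfolding c_def using b sp by (simp add: field_simps)
    qed
    finally show "(\<Sum>k = nat \<lceil>a\<rceil> + 1..p. real k powr (\<alpha> - 1) / \<sigma> (real k)) \<le> M / \<beta> * real p powr \<alpha> / \<sigma> (real p)" .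
  qed
qed

end

context sig
begin

lemma cond_ix_NatIV:
  assumes "\<exists>C>0. \<forall>p::nat. p \<ge> nat \<lceil>a\<rceil> + 1 \<longrightarrow>
         (\<Sum>k = nat \<lceil>a\<rceil> + 1..p. real k powr (\<alpha> - 1) / \<sigma> (real k))
           \<le> C * real p powr \<alpha> / \<sigma> (real p)"
  shows NatIV
proof -
  define n0 where "n0 = nat \<lceil>a\<rceil> + 1"
  obtain C where C: "C > 0" and HC: "\<And>p. p \<ge> n0 \<Longrightarrow> (\<Sum>k = n0..p. real k powr (\<alpha> - 1) / \<sigma> (real k))
           \<le> C * real p powr \<alpha> / \<sigma> (real p)" using assms unfolding n0_def by blast
  define f where "f = (\<lambda>k::nat. real k powr (\<alpha> - 1) / \<sigma> (real k))"
  define S where "S = (\<lambda>p. \<Sum>k = n0..p. f k)"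
  define G where "G = (\<lambda>p::nat. real p powr \<alpha> / \<sigma> (real p))"
  define c where "c = (2::real) powr (-1-\<alpha>)"
  have c: "c > 0" unfolding c_def by simp
  have n0a: "real k \<ge> a" "k \<ge> 1" if "k \<ge> n0" for k using that unfolding n0_def by linarith+
  have f0: "f k \<ge> 0" if "k \<ge> n0" for k unfolding f_def using posD n0a[OF that] by (simp add: less_imp_le)
  have S0: "S p \<ge> 0" for p unfolding S_def using f0 by (intro sum_nonneg) auto
  have SC: "S p \<le> C * G p" if "p \<ge> n0" for p unfolding S_def G_def using HC[OF that] f_def by simp
  have split: "S p = S h + (\<Sum>k = h+1..p. f k)" if "n0 \<le> h + 1" "h \<le> p" for h p
  proof -
    have "S (h + (p - h)) = S h + (\<Sum>k = h+1..h + (p - h). f k)"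
      unfolding S_def by (rule sum.ub_add_nat) (use that in simp)
    thus ?thesis using that by simp
  qed
  have block: "c * G p \<le> (\<Sum>k = h+1..p. f k)" if h: "n0 \<le> h + 1" "2*h \<le> p" "p \<le> 2*h+2" "p \<ge> 1" for h p
  proof -
    have pa: "real p \<ge> a" using n0a[of p] h by simp
    have sp: "\<sigma> (real p) > 0" using posD pa by simp
    define L where "L = (real p / 2) powr \<alpha> / (real p * \<sigma> (real p))"
    have L0: "L \<ge> 0" unfolding L_def using sp by simp
    have "(\<Sum>k = h+1..p. L) \<le> (\<Sum>k = h+1..p. f k)"
    proof (rule sum_mono)
      fix k assume "k \<in> {h+1..p}"
      hence k: "h+1 \<le> k" "k \<le> p" by auto
      have kn: "k \<ge> n0" using k h by simp
      have kp: "real k > 0" using n0a[OF kn] by simp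
      have sk: "\<sigma> (real k) > 0" using posD n0a[OF kn] by simp
      have "real p / 2 \<le> real k" using k h by simp
      hence "(real p / 2) powr \<alpha> \<le> real k powr \<alpha>" using alpha_pos by (intro powr_mono2) auto
      moreover have "real k * \<sigma> (real k) \<le> real p * \<sigma> (real p)"
        using k kp sk n0a[OF kn] by (intro mult_mono monoD') auto
      moreover have "real k * \<sigma> (real k) > 0" using kp sk by simp
      ultimately have "L \<le> real k powr \<alpha> / (real k * \<sigma> (real k))" unfolding L_def
        by (intro frac_le) auto
      also have "\<dots> = f k" unfolding f_def using kp by (simp add: powr_diff)
      finally show "L \<le> f k" .
    qed
    moreover have "(\<Sum>k = h+1..p. L) = real (p - h) * L" by simp
    moreover have "real (p - h) \<ge> real p / 2" using h by (simp add: of_nat_diff)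
    moreover have "c * G p = (real p / 2) * L"
    proof -
      have e1: "(real p / 2) powr \<alpha> = real p powr \<alpha> / 2 powr \<alpha>" by (simp add: powr_divide)
      have e2: "c = 1 / (2 * 2 powr \<alpha>)" unfolding c_def
        using powr_minus_divide[of "2::real" "\<alpha>+1"] by (simp add: powr_add minus_add_distrib add.commute)
      have P: "2 powr \<alpha> > (0::real)" "real p > 0" using h by auto
      show ?thesis unfolding L_def G_def e1 e2 using P sp by (simp add: field_simps)
    qed
    ultimately show ?thesis using mult_right_mono[OF \<open>real (p - h) \<ge> real p / 2\<close> L0] by linarith
  qed
  have Slow: "c * G p \<le> S p" if p: "p \<ge> 2*n0" for p
  proof -
    define h where "h = p div 2"
    have h: "n0 \<le> h + 1" "2*h \<le> p" "p \<le> 2*h+2" "p \<ge> 1" "h \<le> p" using p n0a[of n0] unfolding h_def by auto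
    have "c * G p \<le> (\<Sum>k = h+1..p. f k)" by (rule block[OF h(1-4)])
    also have "\<dots> \<le> S h + (\<Sum>k = h+1..p. f k)" using S0 by simp
    also have "\<dots> = S p" using split[OF h(1) h(5)] by simp
    finally show ?thesis .
  qed
  define q where "q = max 0 (1 - c / C)"
  have q: "0 \<le> q" "q < 1" unfolding q_def using c C by auto
  have step: "S p \<le> q * S (2*p)" if p: "p \<ge> n0" for p
  proof -
    have p1: "p \<ge> 1" using n0a[OF p] by simp
    have "c * G (2*p) \<le> (\<Sum>k = p+1..2*p. f k)" by (rule block) (use p p1 in auto)
    moreover have "S (2*p) = S p + (\<Sum>k = p+1..2*p. f k)" by (rule split) (use p in auto)
    moreover have "c / C * S (2*p) \<le> c / C * (C * G (2*p))" using SC[of "2*p"] p c C by (intro mult_left_mono) auto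
    moreover have "c / C * (C * G (2*p)) = c * G (2*p)" using C by simp
    ultimately have "S p \<le> (1 - c / C) * S (2*p)" by (simp add: algebra_simps)
    also have "\<dots> \<le> q * S (2*p)" unfolding q_def using S0 by (intro mult_right_mono) auto
    finally show ?thesis .
  qed
  have iter: "S p \<le> q^n * S (2^n*p)" if p: "p \<ge> n0" for n p
  proof (induction n)
    case 0 then show ?case by simp
  next
    case (Suc n)
    have "p \<le> 2^n * p" by simp
    hence pn: "2^n*p \<ge> n0" using p by linarith
    have "S p \<le> q^n * S (2^n*p)" by (rule Suc)
    also have "\<dots> \<le> q^n * (q * S (2*(2^n*p)))" using step[OF pn] q by (intro mult_left_mono) auto
    also have "2*(2^n*p) = 2^Suc n * p" by simp
    finally show ?case by (simp add: algebra_simps)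
  qed
  obtain n1 where n1: "q^n1 < c / C" using real_arch_pow_inv[of "c/C" q] q c C by auto
  define n where "n = Suc n1"
  have qn: "q^n \<le> q^n1" unfolding n_def using q mult_left_le_one_le[of "q^n1" q] by simp
  define k :: nat where "k = 2^n"
  have k2: "k \<ge> 2" unfolding k_def n_def by simp
  define \<rho> where "\<rho> = C / c * q^n * real k powr \<alpha>"
  have rho: "\<rho> < real k powr \<alpha>"
  proof -
    have "q^n < c / C" using n1 qn by linarith
    hence "C / c * q^n < C / c * (c / C)" using C c by (intro mult_strict_left_mono) auto
    hence "C / c * q^n < 1" using C c by simp
    hence "(C / c * q^n) * real k powr \<alpha> < 1 * real k powr \<alpha>" by (rule mult_strict_right_mono) (use k2 in simp)
    thus ?thesis unfolding \<rho>_def by simp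
  qed
  have "\<forall>\<^sub>F p in sequentially. \<sigma> (real k * real p) \<le> \<rho> * \<sigma> (real p)"
    using eventually_ge_at_top[of "2*n0"]
  proof eventually_elim
    case (elim p)
    have pn: "p \<ge> n0" using elim by simp
    have "p \<le> k*p" using k2 by simp
    hence kp: "k*p \<ge> n0" using pn by linarith
    have pos: "real p > 0" "real (k*p) > 0" using n0a[OF pn] n0a[OF kp] by auto
    have sy: "\<sigma> (real p) > 0" "\<sigma> (real (k*p)) > 0" using posD[OF n0a(1)[OF pn]] posD[OF n0a(1)[OF kp]] by auto
    have "c * G p \<le> S p" by (rule Slow[OF elim])
    also have "\<dots> \<le> q^n * S (k*p)" unfolding k_def by (rule iter[OF pn])
    also have "\<dots> \<le> q^n * (C * G (k*p))" using SC[OF kp] q by (intro mult_left_mono) auto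
    finally have "c * (real p powr \<alpha> / \<sigma> (real p)) \<le> q^n * (C * (real (k*p) powr \<alpha> / \<sigma> (real (k*p))))" unfolding G_def .
    moreover have "real (k*p) powr \<alpha> = real k powr \<alpha> * real p powr \<alpha>" by (simp add: powr_mult)
    ultimately have "c * real p powr \<alpha> * \<sigma> (real (k*p)) \<le> q^n * C * real k powr \<alpha> * real p powr \<alpha> * \<sigma> (real p)"
      using sy by (simp add: field_simps)
    hence "real p powr \<alpha> * (c * \<sigma> (real (k*p))) \<le> real p powr \<alpha> * (q^n * C * real k powr \<alpha> * \<sigma> (real p))" by (simp add: algebra_simps)
    hence "c * \<sigma> (real (k*p)) \<le> q^n * C * real k powr \<alpha> * \<sigma> (real p)" using pos by (simp add: mult_le_cancel_left)
    hence "\<sigma> (real (k*p)) \<le> (q^n * C * real k powr \<alpha> * \<sigma> (real p)) / c" using c by (simp add: field_simps)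
    also have "\<dots> = \<rho> * \<sigma> (real p)" unfolding \<rho>_def using c by (simp add: field_simps)
    finally show ?case by simp
  qed
  thus ?thesis unfolding NatIV_def using k2 rho by blast
qed

lemma cond_ix_Hub:
  "(\<exists>C>0. \<forall>p::nat. p \<ge> nat \<lceil>a\<rceil> + 1 \<longrightarrow>
         (\<Sum>k = nat \<lceil>a\<rceil> + 1..p. real k powr (\<alpha> - 1) / \<sigma> (real k))
           \<le> C * real p powr \<alpha> / \<sigma> (real p)) \<longleftrightarrow> Hub"
  using cond_ix_NatIV NatIV_Hub Hub_cond_ix by blast

end

context sig
begin

lemma Hub_cond_xii:
  assumes Hub
  shows "\<exists>C>0. \<forall>p::nat. p \<ge> 1 \<and> p \<ge> nat \<lceil>a\<rceil> \<longrightarrow>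
         (\<Sum>j. ennreal (\<sigma> (real (p + j)) / real (p + j) powr (1 + \<alpha>)))
           \<le> ennreal (C * \<sigma> (real p) / real p powr \<alpha>)"
proof -
  obtain \<gamma> M where "hub \<gamma> M" using assms unfolding Hub_def by blast
  hence g: "0 < \<gamma>" "\<gamma> < \<alpha>" "M > 0" and H: "\<forall>x\<ge>a. \<forall>l\<ge>1. \<sigma> (l*x) \<le> M * l powr \<gamma> * \<sigma> x"
    unfolding hub_def by auto
  define \<beta> where "\<beta> = \<alpha> - \<gamma>"
  have b: "\<beta> > 0" unfolding \<beta>_def using g by simp
  show ?thesis
  proof (intro exI[of _ "M * (1 + 1/\<beta>)"] conjI allI impI)
    show "M * (1 + 1/\<beta>) > 0" using g b by (simp add: add_pos_pos)
    fix p :: nat assume p: "p \<ge> 1 \<and> p \<ge> nat \<lceil>a\<rceil>"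
    have pa: "real p \<ge> a" "real p > 0" using p by linarith+
    have sp: "\<sigma> (real p) > 0" using posD pa by simp
    define A where "A = M * \<sigma> (real p) * real p powr (-\<gamma>)"
    have A0: "A \<ge> 0" unfolding A_def using g sp by simp
    have "(\<Sum>j. ennreal (\<sigma> (real (p + j)) / real (p + j) powr (1 + \<alpha>)))
        \<le> (\<Sum>j. ennreal A * ennreal (real (p + j) powr (-1-\<beta>)))"
    proof (rule suminf_le)
      fix j
      define x where "x = real (p + j)"
      have x: "x \<ge> real p" "x > 0" unfolding x_def using pa by auto
      have x1: "1 \<le> x / real p" using x pa by simp
      have "\<sigma> x = \<sigma> ((x / real p) * real p)" using pa by simp
      also have "\<dots> \<le> M * (x / real p) powr \<gamma> * \<sigma> (real p)" by (rule H[rule_format, OF pa(1) x1])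
      finally have "\<sigma> x / x powr (1+\<alpha>) \<le> M * (x / real p) powr \<gamma> * \<sigma> (real p) / x powr (1+\<alpha>)"
        using x by (intro divide_right_mono) auto
      also have "\<dots> = A * x powr (-1-\<beta>)"
      proof -
        have "(x / real p) powr \<gamma> = x powr \<gamma> / real p powr \<gamma>" by (rule powr_divide)
        also have "\<dots> = x powr \<gamma> * (1 / real p powr \<gamma>)" by simp
        also have "1 / real p powr \<gamma> = real p powr (-\<gamma>)" by (rule powr_minus_divide[symmetric])
        finally have "(x / real p) powr \<gamma> = x powr \<gamma> * real p powr (-\<gamma>)" .
        moreover have "x powr (-1-\<beta>) = x powr \<gamma> / x powr (1+\<alpha>)"
          unfolding \<beta>_def by (simp add: powr_diff[symmetric] algebra_simps)
        ultimately show ?thesis unfolding A_def by (simp add: field_simps)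
      qed
      finally show "ennreal (\<sigma> (real (p + j)) / real (p + j) powr (1 + \<alpha>)) \<le> ennreal A * ennreal (real (p + j) powr (-1-\<beta>))"
        unfolding x_def using A0 by (simp add: ennreal_mult[symmetric] ennreal_leI del: ennreal_mult')
    qed auto
    also have "\<dots> = ennreal A * (\<Sum>j. ennreal (real (p + j) powr (-1-\<beta>)))" by simp
    also have "\<dots> \<le> ennreal A * ennreal ((1 + 1/\<beta>) * real p powr (-\<beta>))"
    proof (rule mult_left_mono)
      have "p \<ge> 1" using p by simp
      thus "(\<Sum>j. ennreal (real (p + j) powr (-1-\<beta>))) \<le> ennreal ((1 + 1/\<beta>) * real p powr (-\<beta>))"
        by (rule tail_sum_le[OF b])
    qed simp
    also have "\<dots> = ennreal (M * (1 + 1/\<beta>) * \<sigma> (real p) / real p powr \<alpha>)"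
    proof -
      have "real p powr (-\<gamma>) * real p powr (-\<beta>) = real p powr (-\<gamma> + -\<beta>)" by (rule powr_add[symmetric])
      also have "-\<gamma> + -\<beta> = -\<alpha>" unfolding \<beta>_def by simp
      also have "real p powr (-\<alpha>) = 1 / real p powr \<alpha>" by (rule powr_minus_divide)
      finally have "real p powr (-\<gamma>) * real p powr (-\<beta>) = 1 / real p powr \<alpha>" .
      moreover have "real p powr \<alpha> > 0" using pa by simp
      ultimately have "A * ((1 + 1/\<beta>) * real p powr (-\<beta>)) = M * (1 + 1/\<beta>) * \<sigma> (real p) / real p powr \<alpha>"
        unfolding A_def using b by (simp add: field_simps)
      thus ?thesis using A0 b by (simp add: ennreal_mult[symmetric] del: ennreal_mult')
    qed
    finally show "(\<Sum>j. ennreal (\<sigma> (real (p + j)) / real (p + j) powr (1 + \<alpha>)))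
           \<le> ennreal (M * (1 + 1/\<beta>) * \<sigma> (real p) / real p powr \<alpha>)" .
  qed
qed

end

context sig
begin

lemma cond_xii_NatIV:
  assumes "\<exists>C>0. \<forall>p::nat. p \<ge> 1 \<and> p \<ge> nat \<lceil>a\<rceil> \<longrightarrow>
         (\<Sum>j. ennreal (\<sigma> (real (p + j)) / real (p + j) powr (1 + \<alpha>)))
           \<le> ennreal (C * \<sigma> (real p) / real p powr \<alpha>)"
  shows NatIV
proof -
  define P0 where "P0 = max 1 (nat \<lceil>a\<rceil>)"
  obtain C where C: "C > 0" and HC: "\<And>p. p \<ge> P0 \<Longrightarrow> (\<Sum>j. ennreal (\<sigma> (real (p + j)) / real (p + j) powr (1 + \<alpha>)))
           \<le> ennreal (C * \<sigma> (real p) / real p powr \<alpha>)" using assms unfolding P0_def by auto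
  have P0a: "real p \<ge> a" "p \<ge> 1" "real p > 0" if "p \<ge> P0" for p using that unfolding P0_def by linarith+
  define g where "g = (\<lambda>m::nat. \<sigma> (real m) / real m powr (1 + \<alpha>))"
  define T where "T = (\<lambda>p. \<Sum>j. ennreal (g (p + j)))"
  define H where "H = (\<lambda>p::nat. \<sigma> (real p) / real p powr \<alpha>)"
  define c where "c = (2::real) powr (-1-\<alpha>)"
  have c: "c > 0" unfolding c_def by simp
  have g0: "g m \<ge> 0" if "m \<ge> P0" for m unfolding g_def using posD P0a[OF that] by (simp add: less_imp_le)
  have TC: "T p \<le> ennreal (C * H p)" if "p \<ge> P0" for p unfolding T_def H_def g_def using HC[OF that] by simp
  have Tsplit: "T p = T (2*p) + ennreal (\<Sum>j<p. g (p + j))" if p: "p \<ge> P0" for p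
  proof -
    have "T p = (\<Sum>j. ennreal (g (p + (j + p)))) + (\<Sum>j<p. ennreal (g (p + j)))"
      unfolding T_def using suminf_offset[of "\<lambda>j. ennreal (g (p + j))" p] by simp
    also have "(\<Sum>j. ennreal (g (p + (j + p)))) = T (2*p)"
    proof -
      have "(\<lambda>j. ennreal (g (p + (j + p)))) = (\<lambda>j. ennreal (g (2*p + j)))"
        by (rule ext) (metis add.commute add.left_commute mult_2)
      thus ?thesis unfolding T_def by simp
    qed
    also have "(\<Sum>j<p. ennreal (g (p + j))) = ennreal (\<Sum>j<p. g (p + j))"
      using g0 p by (intro sum_ennreal) auto
    finally show ?thesis .
  qed
  have block: "c * H p \<le> (\<Sum>j<p. g (p + j))" if p: "p \<ge> P0" for p
  proof -
    have sp: "\<sigma> (real p) > 0" using posD P0a[OF p] by simp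
    have pp: "real p > 0" using P0a[OF p] by simp
    define L where "L = \<sigma> (real p) / (2 * real p) powr (1+\<alpha>)"
    have "(\<Sum>j<p. L) \<le> (\<Sum>j<p. g (p + j))"
    proof (rule sum_mono)
      fix j assume "j \<in> {..<p}"
      hence j: "j < p" by simp
      have "\<sigma> (real p) \<le> \<sigma> (real (p+j))" using pp by (intro monoD') auto
      moreover have "real (p+j) powr (1+\<alpha>) \<le> (2 * real p) powr (1+\<alpha>)" using j alpha_pos by (intro powr_mono2) auto
      moreover have "real (p+j) powr (1+\<alpha>) > 0" using pp by simp
      ultimately show "L \<le> g (p + j)" unfolding L_def g_def using sp by (intro frac_le) auto
    qed
    moreover have "(\<Sum>j<p. L) = real p * L" by simp
    moreover have "real p * L = c * H p"
    proof -
      have e1: "(2 * real p) powr (1+\<alpha>) = 2 powr (1+\<alpha>) * (real p * real p powr \<alpha>)"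
        using pp by (simp add: powr_mult powr_add)
      have e2: "c = 1 / 2 powr (1+\<alpha>)" unfolding c_def
        using powr_minus_divide[of "2::real" "1+\<alpha>"] by (simp add: minus_add_distrib)
      show ?thesis unfolding L_def H_def e1 e2 using pp by (simp add: field_simps)
    qed
    ultimately show ?thesis by simp
  qed
  define Tr where "Tr = (\<lambda>p. enn2real (T p))"
  have Tfin: "T p = ennreal (Tr p)" if "p \<ge> P0" for p
  proof -
    have "T p < top" using TC[OF that] by (metis ennreal_less_top order_le_less_trans)
    thus ?thesis unfolding Tr_def by simp
  qed
  have Tr0: "Tr p \<ge> 0" for p unfolding Tr_def by simp
  have H0: "H p > 0" if "p \<ge> P0" for p unfolding H_def using posD P0a[OF that] by simp
  have TrC: "Tr p \<le> C * H p" if "p \<ge> P0" for p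
    using TC[OF that] Tfin[OF that] H0[OF that] C by (simp add: ennreal_le_iff)
  have Trs: "Tr p = Tr (2*p) + (\<Sum>j<p. g (p + j))" if p: "p \<ge> P0" for p
  proof -
    have p2: "2*p \<ge> P0" using p by simp
    have s0: "(\<Sum>j<p. g (p + j)) \<ge> 0" using g0 p by (intro sum_nonneg) auto
    have "ennreal (Tr p) = ennreal (Tr (2*p) + (\<Sum>j<p. g (p + j)))"
      using Tsplit[OF p] Tfin[OF p] Tfin[OF p2] s0 Tr0 by (simp add: ennreal_plus)
    thus ?thesis using s0 Tr0 by (subst (asm) ennreal_inj) auto
  qed
  have Trlow: "c * H p \<le> Tr p" if p: "p \<ge> P0" for p
    using Trs[OF p] block[OF p] Tr0[of "2*p"] by linarith
  define q where "q = max 0 (1 - c / C)"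
  have q: "0 \<le> q" "q < 1" unfolding q_def using c C by auto
  have step: "Tr (2*p) \<le> q * Tr p" if p: "p \<ge> P0" for p
  proof -
    have "c / C * Tr p \<le> c / C * (C * H p)" using TrC[OF p] c C by (intro mult_left_mono) auto
    also have "\<dots> = c * H p" using C by simp
    finally have "c / C * Tr p \<le> (\<Sum>j<p. g (p + j))" using block[OF p] by linarith
    moreover have "(1 - c / C) * Tr p = Tr p - c / C * Tr p" by (simp add: algebra_simps)
    ultimately have "Tr (2*p) \<le> (1 - c / C) * Tr p" using Trs[OF p] by linarith
    also have "\<dots> \<le> q * Tr p" unfolding q_def using Tr0 by (intro mult_right_mono) auto
    finally show ?thesis .
  qed
  have iter: "Tr (2^n*p) \<le> q^n * Tr p" if p: "p \<ge> P0" for n p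
  proof (induction n)
    case 0 then show ?case by simp
  next
    case (Suc n)
    have "p \<le> 2^n * p" by simp
    hence pn: "2^n*p \<ge> P0" using p by linarith
    have "Tr (2^Suc n*p) = Tr (2*(2^n*p))" by (simp add: mult.assoc)
    also have "\<dots> \<le> q * Tr (2^n*p)" by (rule step[OF pn])
    also have "\<dots> \<le> q * (q^n * Tr p)" using Suc q by (intro mult_left_mono) auto
    finally show ?case by (simp add: algebra_simps)
  qed
  obtain n1 where n1: "q^n1 < c / C" using real_arch_pow_inv[of "c/C" q] q c C by auto
  define n where "n = Suc n1"
  have qn: "q^n \<le> q^n1" unfolding n_def using q mult_left_le_one_le[of "q^n1" q] by simp
  define k :: nat where "k = 2^n"
  have k2: "k \<ge> 2" unfolding k_def n_def by simp
  define \<rho> where "\<rho> = C / c * q^n * real k powr \<alpha>"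
  have rho: "\<rho> < real k powr \<alpha>"
  proof -
    have "q^n < c / C" using n1 qn by linarith
    hence "C / c * q^n < C / c * (c / C)" using C c by (intro mult_strict_left_mono) auto
    hence "C / c * q^n < 1" using C c by simp
    hence "(C / c * q^n) * real k powr \<alpha> < 1 * real k powr \<alpha>" by (rule mult_strict_right_mono) (use k2 in simp)
    thus ?thesis unfolding \<rho>_def by simp
  qed
  have "\<forall>\<^sub>F p in sequentially. \<sigma> (real k * real p) \<le> \<rho> * \<sigma> (real p)"
    using eventually_ge_at_top[of "P0"]
  proof eventually_elim
    case (elim p)
    have "p \<le> k*p" using k2 by simp
    hence kp: "k*p \<ge> P0" using elim by linarith
    have pos: "real p > 0" "real (k*p) > 0" using P0a[OF elim] P0a[OF kp] by auto
    have sy: "\<sigma> (real p) > 0" "\<sigma> (real (k*p)) > 0" using posD[OF P0a(1)[OF elim]] posD[OF P0a(1)[OF kp]] by auto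
    have "c * H (k*p) \<le> Tr (k*p)" by (rule Trlow[OF kp])
    also have "\<dots> \<le> q^n * Tr p" unfolding k_def by (rule iter[OF elim])
    also have "\<dots> \<le> q^n * (C * H p)" using TrC[OF elim] q by (intro mult_left_mono) auto
    finally have "c * (\<sigma> (real (k*p)) / real (k*p) powr \<alpha>) \<le> q^n * (C * (\<sigma> (real p) / real p powr \<alpha>))" unfolding H_def .
    moreover have "real (k*p) powr \<alpha> = real k powr \<alpha> * real p powr \<alpha>" by (simp add: powr_mult)
    moreover have "real k powr \<alpha> > 0" "real p powr \<alpha> > 0" using pos k2 by auto
    ultimately have "c * \<sigma> (real (k*p)) * real p powr \<alpha> \<le> q^n * C * \<sigma> (real p) * (real k powr \<alpha> * real p powr \<alpha>)"
      by (simp add: field_simps)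
    hence "real p powr \<alpha> * (c * \<sigma> (real (k*p))) \<le> real p powr \<alpha> * (q^n * C * real k powr \<alpha> * \<sigma> (real p))" by (simp add: algebra_simps)
    hence "c * \<sigma> (real (k*p)) \<le> q^n * C * real k powr \<alpha> * \<sigma> (real p)" using pos by (simp add: mult_le_cancel_left)
    hence "\<sigma> (real (k*p)) \<le> (q^n * C * real k powr \<alpha> * \<sigma> (real p)) / c" using c by (simp add: field_simps)
    also have "\<dots> = \<rho> * \<sigma> (real p)" unfolding \<rho>_def using c by (simp add: field_simps)
    finally show ?case by simp
  qed
  thus ?thesis unfolding NatIV_def using k2 rho by blast
qed

lemma cond_xii_Hub:
  "(\<exists>C>0. \<forall>p::nat. p \<ge> 1 \<and> p \<ge> nat \<lceil>a\<rceil> \<longrightarrow>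
         (\<Sum>j. ennreal (\<sigma> (real (p + j)) / real (p + j) powr (1 + \<alpha>)))
           \<le> ennreal (C * \<sigma> (real p) / real p powr \<alpha>)) \<longleftrightarrow> Hub"
  using cond_xii_NatIV NatIV_Hub Hub_cond_xii by blast

end

theorem theorem2p11:
  fixes \<sigma> :: "real \<Rightarrow> real" and \<alpha> a :: real
  assumes nonneg: "\<forall>t\<ge>0. \<sigma> t \<ge> 0"
    and mono: "mono_on {0..} \<sigma>"
    and lim: "filterlim \<sigma> at_top at_top"
    and alpha_pos: "\<alpha> > 0"
    and a_nonneg: "a \<ge> 0"
    and pos: "\<forall>x\<ge>a. \<sigma> x > 0"
  shows
   "(integral_condition \<sigma> \<alpha> \<longleftrightarrow>
      (\<exists>\<kappa> :: real \<Rightarrow> real. mono_on {0..} \<kappa> \<and> (\<forall>t\<ge>0. \<kappa> t \<ge> 0) \<and>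
         sim_on {0..} \<sigma> \<kappa> \<and> \<kappa> 0 = \<sigma> 0 / \<alpha>\<^sup>2 \<and> integral_condition \<kappa> \<alpha> \<and>
         concave_on {0..} (\<lambda>t. \<kappa> (t powr (1 / \<alpha>))))) \<and>
    (integral_condition \<sigma> \<alpha> \<longleftrightarrow>
      ((\<lambda>\<epsilon>. Limsup at_top (\<lambda>t. ereal (\<epsilon> powr \<alpha> * \<sigma> t / \<sigma> (\<epsilon> * t))))
         \<longlongrightarrow> 0) (at_right 0)) \<and>
    (integral_condition \<sigma> \<alpha> \<longleftrightarrow>
      (\<exists>K>1. Limsup at_top (\<lambda>t. ereal (\<sigma> (K * t) / \<sigma> t)) < ereal (K powr \<alpha>))) \<and>
    (integral_condition \<sigma> \<alpha> \<longleftrightarrow> gamma_index \<sigma> > ereal (1 / \<alpha>)) \<and>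
    (integral_condition \<sigma> \<alpha> \<longleftrightarrow> upper_matuszewska \<sigma> < ereal \<alpha>) \<and>
    (integral_condition \<sigma> \<alpha> \<longleftrightarrow>
      (\<exists>\<gamma>. 0 < \<gamma> \<and> \<gamma> < \<alpha> \<and>
         (a > 0 \<longrightarrow> almost_decreasing_from a (\<lambda>t. \<sigma> t / t powr \<gamma>)) \<and>
         (a = 0 \<longrightarrow> (\<forall>\<epsilon>>0. almost_decreasing_from \<epsilon> (\<lambda>t. \<sigma> t / t powr \<gamma>))))) \<and>
    (integral_condition \<sigma> \<alpha> \<longleftrightarrow>
      (\<exists>C>0. \<forall>y\<ge>a. (\<integral>\<^sup>+ t\<in>{a..y}. ennreal (t powr \<alpha> / \<sigma> t / t) \<partial>lborel)
                       \<le> ennreal (C * y powr \<alpha> / \<sigma> y))) \<and>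
    (integral_condition \<sigma> \<alpha> \<longleftrightarrow>
      (\<exists>C>0. \<forall>p::nat. p \<ge> nat \<lceil>a\<rceil> + 1 \<longrightarrow>
         (\<Sum>k = nat \<lceil>a\<rceil> + 1..p. real k powr (\<alpha> - 1) / \<sigma> (real k))
           \<le> C * real p powr \<alpha> / \<sigma> (real p))) \<and>
    (integral_condition \<sigma> \<alpha> \<longleftrightarrow>
      (\<forall>\<theta>. 0 < \<theta> \<and> \<theta> < 1 \<longrightarrow> (\<exists>k::nat. k \<ge> 2 \<and>
         (\<forall>p::nat. p \<ge> nat \<lceil>a\<rceil> + 1 \<longrightarrow>
            \<sigma> (real k * real p) \<le> \<theta> * real k powr \<alpha> * \<sigma> (real p))))) \<and>
    (integral_condition \<sigma> \<alpha> \<longleftrightarrow>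
      (\<exists>k::nat. k \<ge> 2 \<and>
         limsup (\<lambda>p::nat. ereal (\<sigma> (real k * real p) / \<sigma> (real p))) < ereal (real k powr \<alpha>))) \<and>
    (integral_condition \<sigma> \<alpha> \<longleftrightarrow>
      (\<exists>C>0. \<forall>p::nat. p \<ge> 1 \<and> p \<ge> nat \<lceil>a\<rceil> \<longrightarrow>
         (\<Sum>j. ennreal (\<sigma> (real (p + j)) / real (p + j) powr (1 + \<alpha>)))
           \<le> ennreal (C * \<sigma> (real p) / real p powr \<alpha>)))"
proof -
  interpret s: sig \<sigma> \<alpha> a
    by (unfold_locales) (use nonneg mono lim alpha_pos a_nonneg pos in auto)
  have i: "integral_condition \<sigma> \<alpha> \<longleftrightarrow> s.Hub" by (rule s.cond_i_Hub)
  show ?thesis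
    unfolding i s.cond_ii_Hub s.cond_iii_Hub s.cond_iv_EvIV s.Hub_iff_EvIV[symmetric]
      s.cond_v_Hub s.cond_vi_Hub s.cond_vii_Hub s.cond_viii_Hub s.cond_ix_Hub s.cond_x_Hub
      s.cond_xi_NatIV s.Hub_iff_NatIV[symmetric] s.cond_xii_Hub
    by simp
qed

end
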